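(* Let $n\ge1$, $s\in\{1,\dots,n\}$, let $C\in\mathbb{R}^{n\times n}$ be symmetric positive definite, and let $0<t\le\lambda_{\min}(C)$. If $s\ge\operatorname{rank}(C-tI)$, then $\hat z^D(t)\le\hat z(0)$.
   Context: $\lambda_{\min}(C)$ is the smallest eigenvalue of $C$. For $0\le t\le\lambda_{\min}(C)$ let $A(t)\in\mathbb{R}^{n\times n}$ be a Cholesky factor of $C-tI$ (so $C-tI=A(t)^\top A(t)$), with $i$-th column $a_i(t)$, and for $x\in[0,1]^n$ let $M_t(x)=\sum_i x_i a_i(t)a_i(t)^\top$. For a positive semidefinite $X$ with eigenvalues $\lambda_1(X)\ge\dots\ge\lambda_n(X)$ and $t\ge0$, $\Phi_s(X;t)=\sum_{i=1}^s\log(\lambda_i(X)+t)$ (natural log); $\widehat{\Phi}_s(\cdot\,;t)$ is its concave envelope on the cone of $n\times n$ positive semidefinite matrices. $\hat z(0)=\max\{\widehat{\Phi}_s(M_0(x);0) : x\in[0,1]^n,\ \sum_i x_i=s\}$ (the factorization bound), and for $t>0$, $\hat z^D(t)=\max\{\log\det(M_t(x)+tI) : x\in[0,1]^n,\ \sum_i x_i=s\}-(n-s)\log(t)$. *)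

theory Defs
  imports "HOL-Analysis.Analysis" "HOL-Library.Multiset"
begin

text \<open>Square real matrices of size n = CARD('n) are elements of real^'n^'n.
  The index type is linearly ordered so that triangularity makes sense.\<close>

definition symmetric_mat :: "real^'n^'n \<Rightarrow> bool" where
  "symmetric_mat X \<longleftrightarrow> transpose X = X"

definition psd :: "real^'n^'n \<Rightarrow> bool" where
  "psd X \<longleftrightarrow> symmetric_mat X \<and> (\<forall>v. 0 \<le> v \<bullet> (X *v v))"

definition pd :: "real^'n^'n \<Rightarrow> bool" where
  "pd X \<longleftrightarrow> symmetric_mat X \<and> (\<forall>v. v \<noteq> 0 \<longrightarrow> 0 < v \<bullet> (X *v v))"

text \<open>Eigenvalues with multiplicity: the multiset of roots of the characteristic
  polynomial det(xI - X) (which splits over the reals for symmetric X).\<close>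
definition eig_mset :: "real^'n^'n \<Rightarrow> real multiset" where
  "eig_mset X = (THE M. \<forall>x. det (mat x - X) = (\<Prod>a\<in>#M. x - a))"

text \<open>Eigenvalues in nonincreasing order: lambda_1 \<ge> ... \<ge> lambda_n (0-indexed list).\<close>
definition eigs_desc :: "real^'n^'n \<Rightarrow> real list" where
  "eigs_desc X = rev (sorted_list_of_multiset (eig_mset X))"

definition lambda_min :: "real^'n^'n \<Rightarrow> real" where
  "lambda_min X = Min (set_mset (eig_mset X))"

definition cholesky_factor :: "real^('n::{finite,linorder})^('n::{finite,linorder}) \<Rightarrow> real^('n::{finite,linorder})^('n::{finite,linorder}) \<Rightarrow> bool" where
  "cholesky_factor A B \<longleftrightarrow> B = transpose A ** A \<and>
      (\<forall>i j. j < i \<longrightarrow> A $ i $ j = 0) \<and> (\<forall>i. 0 \<le> A $ i $ i)"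

definition outer :: "real^'n \<Rightarrow> real^'n^'n" where
  "outer a = (\<chi> i j. a $ i * a $ j)"

definition M_of :: "real^'n^'n \<Rightarrow> real^'n \<Rightarrow> real^'n^'n" where
  "M_of A x = (\<Sum>i\<in>UNIV. (x $ i) *\<^sub>R outer (column i A))"

definition Phi :: "nat \<Rightarrow> real^'n^'n \<Rightarrow> real \<Rightarrow> ereal" where
  "Phi s X t = (if (\<forall>i<s. 0 < eigs_desc X ! i + t)
                then ereal (\<Sum>i<s. ln (eigs_desc X ! i + t)) else -\<infinity>)"

text \<open>Concavity of an extended-real valued function on S (convexity of the hypograph).\<close>
definition hypo_concave_on :: "'a::real_vector set \<Rightarrow> ('a \<Rightarrow> ereal) \<Rightarrow> bool" where
  "hypo_concave_on S g \<longleftrightarrow> (\<forall>x\<in>S. \<forall>y\<in>S. \<forall>u::real. 0 \<le> u \<longrightarrow> u \<le> 1 \<longrightarrow>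
      (\<forall>a b::real. ereal a \<le> g x \<longrightarrow> ereal b \<le> g y \<longrightarrow>
         ereal (u * a + (1 - u) * b) \<le> g (u *\<^sub>R x + (1 - u) *\<^sub>R y)))"

definition concave_env :: "('a::real_vector \<Rightarrow> ereal) \<Rightarrow> 'a set \<Rightarrow> 'a \<Rightarrow> ereal" where
  "concave_env f S X = Inf {g X | g. hypo_concave_on S g \<and> (\<forall>Y\<in>S. f Y \<le> g Y)}"

definition Phi_hat :: "nat \<Rightarrow> real^'n^'n \<Rightarrow> real \<Rightarrow> ereal" where
  "Phi_hat s X t = concave_env (\<lambda>Y. Phi s Y t) {Y. psd Y} X"

definition feas :: "nat \<Rightarrow> (real^'n) set" where
  "feas s = {x. (\<forall>i. 0 \<le> x $ i \<and> x $ i \<le> 1) \<and> (\<Sum>i\<in>UNIV. x $ i) = real s}"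

text \<open>Factorization bound hat z(0), with A0 a Cholesky factor of C.\<close>
definition zhat0 :: "nat \<Rightarrow> real^'n^'n \<Rightarrow> ereal" where
  "zhat0 s A0 = (SUP x\<in>feas s. Phi_hat s (M_of A0 x) 0)"

text \<open>hat z^D(t), with At a Cholesky factor of C - tI.\<close>
definition zD :: "nat \<Rightarrow> real \<Rightarrow> real^'n^'n \<Rightarrow> real" where
  "zD s t At = (SUP x\<in>feas s. ln (det (M_of At x + t *\<^sub>R mat 1)))
               - (real CARD('n) - real s) * ln t"

end

theory Submission
  imports Defs "HOL-Computational_Algebra.Polynomial"
begin

abbreviation nn where "nn \<equiv> CARD('n::finite)"

definition onb :: "(nat \<Rightarrow> real^'n::finite) \<Rightarrow> bool" where
  "onb q \<longleftrightarrow> (\<forall>i<CARD('n). \<forall>j<CARD('n). q i \<bullet> q j = (if i = j then 1 else 0))"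

lemma outer_mulv: "outer a *v v = (a \<bullet> v) *\<^sub>R a"
  by (simp add: outer_def vec_eq_iff matrix_vector_mult_def inner_vec_def sum_distrib_left mult.commute mult.left_commute)

lemma inner_outer: "v \<bullet> (outer a *v v) = (a \<bullet> v)^2"
  by (simp add: outer_mulv power2_eq_square inner_commute)

lemma sum_scaleR_mulv: "(\<Sum>i\<in>I. c i *\<^sub>R (B i :: real^'n::finite^'m::finite)) *v v = (\<Sum>i\<in>I. c i *\<^sub>R (B i *v v))"
proof (induction I rule: infinite_finite_induct)
  case (infinite A) then show ?case by simp
next
  case empty then show ?case by (simp add: matrix_vector_mult_def vec_eq_iff)
next
  case (insert x F)
  then show ?case by (simp add: matrix_vector_mult_add_rdistrib scaleR_matrix_vector_assoc)
qed

lemma orthonormal_bessel: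
  fixes f :: "'i \<Rightarrow> 'a::real_inner"
  assumes "finite I" and orth: "\<And>i j. i \<in> I \<Longrightarrow> j \<in> I \<Longrightarrow> f i \<bullet> f j = (if i = j then 1 else 0)"
  shows "(\<Sum>i\<in>I. (f i \<bullet> w)^2) \<le> w \<bullet> w"
proof -
  define p where "p = (\<Sum>i\<in>I. (f i \<bullet> w) *\<^sub>R f i)"
  have pw: "p \<bullet> w = (\<Sum>i\<in>I. (f i \<bullet> w)^2)"
    by (simp add: p_def inner_sum_left power2_eq_square)
  have pf: "p \<bullet> f j = f j \<bullet> w" if "j \<in> I" for j
  proof -
    have "p \<bullet> f j = (\<Sum>i\<in>I. (f i \<bullet> w) * (if i = j then 1 else 0))"
      using orth that by (simp add: p_def inner_sum_left)
    also have "\<dots> = f j \<bullet> w" using that assms(1) by (simp add: if_distrib sum.delta cong: if_cong)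
    finally show ?thesis .
  qed
  have pp: "p \<bullet> p = (\<Sum>i\<in>I. (f i \<bullet> w)^2)"
  proof -
    have "p \<bullet> p = (\<Sum>i\<in>I. (f i \<bullet> w) * (f i \<bullet> p))"
      by (subst (1) p_def) (simp add: inner_sum_left)
    also have "\<dots> = (\<Sum>i\<in>I. (f i \<bullet> w) * (p \<bullet> f i))"
      by (simp add: inner_commute)
    also have "\<dots> = (\<Sum>i\<in>I. (f i \<bullet> w)^2)"
      by (rule sum.cong) (auto simp: pf power2_eq_square)
    finally show ?thesis .
  qed
  have "0 \<le> (w - p) \<bullet> (w - p)" by simp
  also have "\<dots> = w \<bullet> w - 2 * (p \<bullet> w) + p \<bullet> p"
    by (simp add: inner_diff_left inner_diff_right inner_commute)
  finally show ?thesis using pw pp by simp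
qed

lemma onb_expand:
  fixes q :: "nat \<Rightarrow> real^'n::finite"
  assumes "onb q"
  shows "v = (\<Sum>i<CARD('n). (q i \<bullet> v) *\<^sub>R q i)"
proof (rule ccontr)
  define p where "p = (\<Sum>i<CARD('n). (q i \<bullet> v) *\<^sub>R q i)"
  assume "v \<noteq> (\<Sum>i<CARD('n). (q i \<bullet> v) *\<^sub>R q i)"
  then have w0: "v - p \<noteq> 0" by (simp add: p_def)
  have orth: "q j \<bullet> (v - p) = 0" if "j < CARD('n)" for j
  proof -
    have "q j \<bullet> p = (\<Sum>i<CARD('n). (q i \<bullet> v) * (if j = i then 1 else 0))"
      using assms that by (simp add: p_def inner_sum_right onb_def)
    also have "\<dots> = q j \<bullet> v" using that by (simp add: if_distrib sum.delta cong: if_cong)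
    finally show ?thesis by (simp add: inner_diff_right)
  qed
  define S where "S = insert (v - p) (q ` {..<CARD('n)})"
  have inj: "inj_on q {..<CARD('n)}"
  proof (rule inj_onI)
    fix i j assume "i \<in> {..<CARD('n)}" "j \<in> {..<CARD('n)}" "q i = q j"
    then have "q i \<bullet> q j = 1" using assms by (auto simp: onb_def)
    then show "i = j" using assms \<open>i \<in> _\<close> \<open>j \<in> _\<close> by (auto simp: onb_def split: if_splits)
  qed
  have notin: "v - p \<notin> q ` {..<CARD('n)}"
  proof
    assume "v - p \<in> q ` {..<CARD('n)}"
    then obtain j where "j < CARD('n)" "v - p = q j" by auto
    then have "(v - p) \<bullet> q j = 1" using assms by (simp add: onb_def)
    moreover have "(v - p) \<bullet> q j = 0" using orth[OF \<open>j < _\<close>] by (simp add: inner_commute)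
    ultimately show False by simp
  qed
  have cardS: "card S = Suc CARD('n)"
    using notin inj by (simp add: S_def card_insert_if card_image)
  have "pairwise orthogonal S"
    using assms orth by (auto simp: S_def pairwise_def orthogonal_def onb_def inner_commute)
  moreover have "0 \<notin> S"
  proof -
    have "q i \<noteq> 0" if "i < CARD('n)" for i
    proof -
      have "q i \<bullet> q i = 1" using assms that by (simp add: onb_def)
      then show ?thesis by auto
    qed
    then show ?thesis using w0 by (auto simp: S_def)
  qed
  ultimately have "independent S" by (rule pairwise_orthogonal_independent)
  then have "card S \<le> DIM(real^'n)" by (rule independent_card_le)
  then show False using cardS by simp
qed

lemma onb_parseval:
  fixes q :: "nat \<Rightarrow> real^'n::finite"
  assumes "onb q"
  shows "(\<Sum>i<CARD('n). (q i \<bullet> v)^2) = v \<bullet> v"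
proof -
  have "v \<bullet> v = v \<bullet> (\<Sum>i<CARD('n). (q i \<bullet> v) *\<^sub>R q i)"
    using onb_expand[OF assms, of v] by simp
  also have "\<dots> = (\<Sum>i<CARD('n). (q i \<bullet> v)^2)"
    by (simp add: inner_sum_right power2_eq_square inner_commute)
  finally show ?thesis by simp
qed

lemma onb_sum_outer:
  fixes q :: "nat \<Rightarrow> real^'n::finite"
  assumes "onb q"
  shows "(\<Sum>i<CARD('n). outer (q i)) = mat 1"
proof (rule matrix_eq[THEN iffD2], intro allI)
  fix v :: "real^'n"
  have "(\<Sum>i<CARD('n). outer (q i)) *v v = (\<Sum>i<CARD('n). 1 *\<^sub>R outer (q i)) *v v" by simp
  also have "\<dots> = (\<Sum>i<CARD('n). (q i \<bullet> v) *\<^sub>R q i)"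
    by (simp only: sum_scaleR_mulv outer_mulv) simp
  also have "\<dots> = v" using onb_expand[OF assms] by simp
  finally show "(\<Sum>i<CARD('n). outer (q i)) *v v = mat 1 *v v" by simp
qed

lemma onb_norm: "onb q \<Longrightarrow> i < CARD('n) \<Longrightarrow> q i \<bullet> q i = (1::real)" for q :: "nat \<Rightarrow> real^'n::finite"
  by (simp add: onb_def)

lemma onb_orth: "onb q \<Longrightarrow> i < CARD('n) \<Longrightarrow> j < CARD('n) \<Longrightarrow> i \<noteq> j \<Longrightarrow> q i \<bullet> q j = (0::real)"
  for q :: "nat \<Rightarrow> real^'n::finite"
  by (simp add: onb_def)

lemma det_spec:
  fixes q :: "nat \<Rightarrow> real^'n::finite"
  assumes "onb q"
  shows "det (\<Sum>i<CARD('n). d i *\<^sub>R outer (q i)) = (\<Prod>i<CARD('n). d i)"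
proof -
  obtain e :: "nat \<Rightarrow> 'n" where e: "bij_betw e {0..<CARD('n)} UNIV"
    using ex_bij_betw_nat_finite[of "UNIV :: 'n set"] by auto
  have e': "bij_betw e {..<CARD('n)} UNIV" using e by (simp add: atLeast0LessThan)
  define r where "r = inv_into {..<CARD('n)} e"
  have r: "bij_betw r UNIV {..<CARD('n)}" unfolding r_def by (rule bij_betw_inv_into[OF e'])
  define Q :: "real^'n^'n" where "Q = (\<chi> a. q (r a))"
  define D :: "real^'n^'n" where "D = (\<chi> a b. if a = b then d (r a) else 0)"
  have reidx: "(\<Sum>j<CARD('n). g j) = (\<Sum>a\<in>UNIV. g (r a))" for g :: "nat \<Rightarrow> real"
    using sum.reindex_bij_betw[OF r, of g] by simp
  have main: "(\<Sum>i<CARD('n). c i *\<^sub>R outer (q i)) = transpose Q ** (\<chi> a b. if a = b then c (r a) else 0) ** Q"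
    for c :: "nat \<Rightarrow> real"
  proof -
    have "(\<Sum>i<CARD('n). c i *\<^sub>R outer (q i)) $ u $ v = (transpose Q ** (\<chi> a b. if a = b then c (r a) else 0) ** Q) $ u $ v" for u v
    proof -
      have "(\<Sum>i<CARD('n). c i *\<^sub>R outer (q i)) $ u $ v = (\<Sum>i<CARD('n). c i * (q i $ u * q i $ v))"
        by (simp add: outer_def)
      also have "\<dots> = (\<Sum>a\<in>UNIV. c (r a) * (q (r a) $ u * q (r a) $ v))" by (rule reidx)
      also have "\<dots> = (transpose Q ** (\<chi> a b. if a = b then c (r a) else 0) ** Q) $ u $ v"
        by (simp add: matrix_matrix_mult_def transpose_def Q_def if_distrib sum.delta' cong: if_cong)
          (simp add: mult_ac)
      finally show ?thesis .
    qed
    then show ?thesis by (simp add: vec_eq_iff)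
  qed
  have QQ: "transpose Q ** Q = mat 1"
  proof -
    have "mat 1 = (\<Sum>i<CARD('n). 1 *\<^sub>R outer (q i))" using onb_sum_outer[OF assms] by simp
    also have "\<dots> = transpose Q ** (\<chi> a b. if a = b then 1 else 0) ** Q" by (rule main)
    also have "(\<chi> a b. if a = b then (1::real) else 0) = mat 1" by (simp add: mat_def vec_eq_iff)
    finally show ?thesis by (simp add: matrix_mul_lid)
  qed
  have dQ: "det Q * det Q = 1"
    using arg_cong[OF QQ, of det] by (simp add: det_mul det_I)
  have dD: "det (\<chi> a b. if a = b then d (r a) else (0::real)) = (\<Prod>a\<in>UNIV. d (r a))"
    by (subst det_diagonal) auto
  have "det (\<Sum>i<CARD('n). d i *\<^sub>R outer (q i)) = det (transpose Q) * det (\<chi> a b. if a = b then d (r a) else (0::real)) * det Q"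
    by (simp add: main det_mul)
  also have "\<dots> = (\<Prod>a\<in>UNIV. d (r a))" using dQ dD by (simp add: det_transpose algebra_simps)
  also have "\<dots> = (\<Prod>j<CARD('n). d j)" using prod.reindex_bij_betw[OF r, of d] by simp
  finally show ?thesis .
qed

lemma mat_spec:
  fixes q :: "nat \<Rightarrow> real^'n::finite"
  assumes "onb q"
  shows "mat x - (\<Sum>i<CARD('n). d i *\<^sub>R outer (q i)) = (\<Sum>i<CARD('n). (x - d i) *\<^sub>R outer (q i))"
proof -
  have "mat x = x *\<^sub>R (mat 1 :: real^'n^'n)" by (simp add: vec_eq_iff mat_def)
  also have "\<dots> = x *\<^sub>R (\<Sum>i<CARD('n). outer (q i))" by (simp only: onb_sum_outer[OF assms])
  also have "\<dots> = (\<Sum>i<CARD('n). x *\<^sub>R outer (q i))" by (simp add: scaleR_sum_right)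
  finally show ?thesis by (simp add: sum_subtractf scaleR_diff_left)
qed

lemma mset_poly_unique:
  fixes M N :: "real multiset"
  shows "(\<Prod>a\<in>#M. [:-a, 1:]) = (\<Prod>a\<in>#N. [:-a, 1:]) \<Longrightarrow> M = N"
proof (induction M arbitrary: N)
  case empty
  show ?case
  proof (rule ccontr)
    assume "{#} \<noteq> N"
    then obtain b where "b \<in># N" by (metis multiset_nonemptyE)
    then have "poly (\<Prod>a\<in>#N. [:-a, 1:]) b = 0" by (auto simp: poly_prod_mset)
    then show False using empty by simp
  qed
next
  case (add a M)
  have z: "poly (\<Prod>a\<in>#add_mset a M. [:-a, 1:]) a = 0" by (simp add: poly_prod_mset)
  have h: "poly (\<Prod>a\<in>#N. [:-a, 1:]) a = poly (\<Prod>a\<in>#add_mset a M. [:-a, 1:]) a" by (simp only: add.prems)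
  have "poly (\<Prod>a\<in>#N. [:-a, 1:]) a = 0" by (simp only: h z)
  then have "a \<in># N" by (auto simp: poly_prod_mset prod_mset_zero_iff)
  then obtain N' where N: "N = add_mset a N'" by (metis multi_member_split)
  have "[:-a, 1:] * (\<Prod>a\<in>#M. [:-a, 1:]) = [:-a, 1:] * (\<Prod>a\<in>#N'. [:-a, 1:])"
    using add.prems N by simp
  then have "(\<Prod>a\<in>#M. [:-a, 1:]) = (\<Prod>a\<in>#N'. [:-a, 1:])"
    by (subst (asm) mult_left_cancel) auto
  then show ?case using add.IH N by simp
qed

lemma mset_fun_unique:
  fixes M N :: "real multiset"
  assumes "\<And>x. (\<Prod>a\<in>#M. x - a) = (\<Prod>a\<in>#N. x - a)"
  shows "M = N"
proof (rule mset_poly_unique)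
  have "poly (\<Prod>a\<in>#M. [:-a, 1:]) = poly (\<Prod>a\<in>#N. [:-a, 1:])"
    using assms by (simp add: fun_eq_iff poly_prod_mset)
  then show "(\<Prod>a\<in>#M. [:-a, 1:]) = (\<Prod>a\<in>#N. [:-a, 1:])" by (simp add: poly_eq_poly_eq_iff)
qed

lemma eig_mset_spec:
  fixes q :: "nat \<Rightarrow> real^'n::finite"
  assumes "onb q" and X: "X = (\<Sum>i<CARD('n). d i *\<^sub>R outer (q i))"
  shows "eig_mset X = image_mset d (mset_set {..<CARD('n)})"
proof -
  let ?M = "image_mset d (mset_set {..<CARD('n)})"
  have P: "det (mat x - X) = (\<Prod>a\<in>#?M. x - a)" for x
  proof -
    have "det (mat x - X) = (\<Prod>i<CARD('n). x - d i)"
      using X mat_spec[OF assms(1)] det_spec[OF assms(1)] by simp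
    also have "\<dots> = (\<Prod>a\<in>#?M. x - a)"
      by (simp add: prod_unfold_prod_mset multiset.map_comp o_def)
    finally show ?thesis .
  qed
  show ?thesis unfolding eig_mset_def
  proof (rule the_equality)
    show "\<forall>x. det (mat x - X) = (\<Prod>a\<in>#?M. x - a)" using P by simp
  next
    fix M assume "\<forall>x. det (mat x - X) = (\<Prod>a\<in>#M. x - a)"
    then show "M = ?M" using P by (intro mset_fun_unique) simp
  qed
qed

lemma sym_inner:
  fixes X :: "real^'n::finite^'n"
  assumes "symmetric_mat X"
  shows "(X *v a) \<bullet> b = a \<bullet> (X *v b)"
proof -
  have "a \<bullet> (X *v b) = (a v* X) \<bullet> b" by (simp add: dot_lmul_matrix)
  also have "a v* X = transpose X *v a" by (simp add: transpose_matrix_vector)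
  also have "\<dots> = X *v a" using assms by (simp add: symmetric_mat_def)
  finally show ?thesis by simp
qed

lemma quad_bound_zero:
  fixes y c :: real
  assumes "\<And>e. e > 0 \<Longrightarrow> 2 * e * y \<le> e^2 * c" and "y \<ge> 0"
  shows "y = 0"
proof (rule ccontr)
  assume "y \<noteq> 0"
  then have y: "y > 0" using assms(2) by simp
  define e where "e = y / (\<bar>c\<bar> + 1)"
  have e: "e > 0" using y by (simp add: e_def)
  have "2 * e * y \<le> e^2 * c" using assms(1)[OF e] .
  then have "2 * y \<le> e * c" using e by (simp add: power2_eq_square mult.assoc)
  also have "e * c \<le> e * \<bar>c\<bar>" using e by (simp add: mult_left_mono)
  also have "e * \<bar>c\<bar> < y" using y by (simp add: e_def field_simps)
  finally show False using y by simp
qed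

lemma spectral_partial:
  fixes X :: "real^'n::finite^'n"
  assumes sym: "symmetric_mat X"
  shows "k \<le> CARD('n) \<Longrightarrow> \<exists>q lam. (\<forall>i<k. \<forall>j<k. q i \<bullet> q j = (if i = j then 1 else 0)) \<and>
     (\<forall>i<k. X *v q i = lam i *\<^sub>R q i) \<and>
     (\<forall>i<k. \<forall>v. (\<forall>j<i. q j \<bullet> v = 0) \<longrightarrow> v \<bullet> (X *v v) \<le> lam i * (v \<bullet> v))"
proof (induction k)
  case 0
  show ?case by auto
next
  case (Suc k)
  then obtain q lam where
    orth: "\<forall>i<k. \<forall>j<k. q i \<bullet> q j = (if i = j then 1 else 0)" and
    eig: "\<forall>i<k. X *v q i = lam i *\<^sub>R q i" and
    mx: "\<forall>i<k. \<forall>v. (\<forall>j<i. q j \<bullet> v = 0) \<longrightarrow> v \<bullet> (X *v v) \<le> lam i * (v \<bullet> v)"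
    by auto
  have kn: "k < CARD('n)" using Suc.prems by simp
  define U where "U = (\<Inter>j\<in>{..<k}. {v::real^'n. q j \<bullet> v = 0})"
  have U_iff: "v \<in> U \<longleftrightarrow> (\<forall>j<k. q j \<bullet> v = 0)" for v by (auto simp: U_def)
  have "dim (q ` {..<k}) \<le> card (q ` {..<k})" by (rule dim_le_card) (auto intro: span_base)
  also have "\<dots> \<le> k" using card_image_le[of "{..<k}" q] by simp
  finally have "dim (q ` {..<k}) < DIM(real^'n)" using kn by simp
  then obtain x0 :: "real^'n" where x0: "x0 \<noteq> 0" "\<And>y. y \<in> span (q ` {..<k}) \<Longrightarrow> orthogonal x0 y"
    using orthogonal_to_subspace_exists by blast
  define u where "u = x0 /\<^sub>R norm x0"
  have "orthogonal x0 (q j)" if "j < k" for j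
    using x0(2) span_base[of "q j" "q ` {..<k}"] that by auto
  then have uU: "u \<in> U" by (auto simp: U_iff u_def orthogonal_def inner_commute)
  have un: "norm u = 1" using x0 by (simp add: u_def)
  define K where "K = U \<inter> sphere 0 1"
  have "closed U" unfolding U_def by (intro closed_INT ballI closed_hyperplane)
  then have cK: "compact K" unfolding K_def by (intro closed_Int_compact) auto
  have neK: "K \<noteq> {}" using uU un by (auto simp: K_def)
  have cont: "continuous_on K (\<lambda>v. v \<bullet> (X *v v))"
    by (intro continuous_intros matrix_vector_mult_linear_continuous_on[THEN continuous_on_subset]) auto
  obtain w where wK: "w \<in> K" and wmax: "\<And>v. v \<in> K \<Longrightarrow> v \<bullet> (X *v v) \<le> w \<bullet> (X *v w)"
    using continuous_attains_sup[OF cK neK cont] by auto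
  define l where "l = w \<bullet> (X *v w)"
  have wU: "w \<in> U" and wn: "w \<bullet> w = 1" using wK by (auto simp: K_def dot_square_norm)
  have subU: "subspace U" by (auto simp: subspace_def U_iff inner_add_right)
  have bnd: "v \<bullet> (X *v v) \<le> l * (v \<bullet> v)" if "v \<in> U" for v
  proof (cases "v = 0")
    case True then show ?thesis by simp
  next
    case False
    define v' where "v' = v /\<^sub>R norm v"
    have "v' \<in> K" using False that subU by (auto simp: K_def v'_def subspace_scale)
    then have "v' \<bullet> (X *v v') \<le> l" using wmax by (simp add: l_def)
    moreover have "v' \<bullet> (X *v v') = (v \<bullet> (X *v v)) / (v \<bullet> v)"
      using False by (simp add: v'_def matrix_vector_mult_scaleR dot_square_norm power2_eq_square divide_inverse)
    ultimately show ?thesis using False by (simp add: divide_le_eq)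
  qed
  define y where "y = X *v w - l *\<^sub>R w"
  have yU: "y \<in> U"
  proof -
    have "q j \<bullet> y = 0" if "j < k" for j
    proof -
      have "q j \<bullet> (X *v w) = (X *v q j) \<bullet> w" using sym_inner[OF sym] by simp
      also have "\<dots> = lam j * (q j \<bullet> w)" using eig that by simp
      also have "\<dots> = 0" using wU that by (simp add: U_iff)
      finally show ?thesis using wU that by (simp add: y_def inner_diff_right U_iff)
    qed
    then show ?thesis by (simp add: U_iff)
  qed
  have yy: "y \<bullet> y = 0"
  proof (rule quad_bound_zero)
    fix e :: real assume "e > 0"
    have "w + e *\<^sub>R y \<in> U" using wU yU subU by (simp add: subspace_add subspace_scale)
    then have b: "(w + e *\<^sub>R y) \<bullet> (X *v (w + e *\<^sub>R y)) \<le> l * ((w + e *\<^sub>R y) \<bullet> (w + e *\<^sub>R y))"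
      by (rule bnd)
    have s1: "(w + e *\<^sub>R y) \<bullet> (X *v (w + e *\<^sub>R y)) = l + 2 * e * (y \<bullet> (X *v w)) + e^2 * (y \<bullet> (X *v y))"
      using sym_inner[OF sym, of y w] 
      by (simp add: matrix_vector_right_distrib matrix_vector_mult_scaleR inner_add_left inner_add_right l_def
          power2_eq_square algebra_simps inner_commute)
    have s2: "(w + e *\<^sub>R y) \<bullet> (w + e *\<^sub>R y) = 1 + 2 * e * (y \<bullet> w) + e^2 * (y \<bullet> y)"
      using wn by (simp add: inner_add_left inner_add_right power2_eq_square algebra_simps inner_commute)
    have yX: "y \<bullet> (X *v w) = y \<bullet> y + l * (y \<bullet> w)" by (simp add: y_def inner_diff_right)
    have b': "l + 2 * e * (y \<bullet> (X *v w)) + e^2 * (y \<bullet> (X *v y)) \<le> l * (1 + 2 * e * (y \<bullet> w) + e^2 * (y \<bullet> y))"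
      using b by (simp only: s1 s2)
    define A where "A = y \<bullet> y"
    define B where "B = y \<bullet> w"
    define Cc where "Cc = y \<bullet> (X *v y)"
    have "l + 2 * e * (A + l * B) + e^2 * Cc \<le> l * (1 + 2 * e * B + e^2 * A)"
      using b' yX by (simp add: A_def B_def Cc_def)
    then have "2 * e * A \<le> e^2 * (l * A - Cc)" by (simp add: algebra_simps)
    then show "2 * e * (y \<bullet> y) \<le> e^2 * (l * (y \<bullet> y) - y \<bullet> (X *v y))"
      by (simp add: A_def Cc_def)
  next
    show "0 \<le> y \<bullet> y" by simp
  qed
  then have weig: "X *v w = l *\<^sub>R w" by (simp add: y_def)
  define q' where "q' = q(k := w)"
  define lam' where "lam' = lam(k := l)"
  show ?case
  proof (intro exI[of _ q'] exI[of _ lam'] conjI allI impI)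
    fix i j assume "i < Suc k" "j < Suc k"
    then show "q' i \<bullet> q' j = (if i = j then 1 else 0)"
      using orth wU wn by (auto simp: q'_def U_iff less_Suc_eq inner_commute)
  next
    fix i assume "i < Suc k"
    then show "X *v q' i = lam' i *\<^sub>R q' i" using eig weig by (auto simp: q'_def lam'_def less_Suc_eq)
  next
    fix i v assume i: "i < Suc k" and v: "\<forall>j<i. q' j \<bullet> v = 0"
    show "v \<bullet> (X *v v) \<le> lam' i * (v \<bullet> v)"
    proof (cases "i = k")
      case True
      then have "v \<in> U" using v by (auto simp: U_iff q'_def)
      then show ?thesis using bnd True by (simp add: lam'_def)
    next
      case False
      then have "i < k" using i by simp
      then show ?thesis using mx v by (auto simp: q'_def lam'_def)
    qed
  qed
qed

lemma spectral:
  fixes X :: "real^'n::finite^'n"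
  assumes sym: "symmetric_mat X"
  obtains q lam where "onb q" "\<And>i j. i \<le> j \<Longrightarrow> j < CARD('n) \<Longrightarrow> lam j \<le> lam i"
    "X = (\<Sum>i<CARD('n). lam i *\<^sub>R outer (q i))"
proof -
  obtain q lam where
    orth: "\<forall>i<CARD('n). \<forall>j<CARD('n). q i \<bullet> q j = (if i = j then 1 else 0)" and
    eig: "\<forall>i<CARD('n). X *v q i = lam i *\<^sub>R q i" and
    mx: "\<forall>i<CARD('n). \<forall>v. (\<forall>j<i. q j \<bullet> v = 0) \<longrightarrow> v \<bullet> (X *v v) \<le> lam i * (v \<bullet> v)"
    using spectral_partial[OF sym, of "CARD('n)"] by auto
  have onb: "onb q" using orth by (simp add: onb_def)
  have mono: "lam j \<le> lam i" if "i \<le> j" "j < CARD('n)" for i j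
  proof -
    have "\<forall>l<i. q l \<bullet> q j = 0" using orth that by auto
    then have "q j \<bullet> (X *v q j) \<le> lam i * (q j \<bullet> q j)" using mx that by auto
    moreover have "q j \<bullet> (X *v q j) = lam j" using eig orth that by simp
    ultimately show ?thesis using orth that by simp
  qed
  have "X = (\<Sum>i<CARD('n). lam i *\<^sub>R outer (q i))"
  proof (rule matrix_eq[THEN iffD2], intro allI)
    fix v :: "real^'n"
    have "X *v v = X *v (\<Sum>i<CARD('n). (q i \<bullet> v) *\<^sub>R q i)" using onb_expand[OF onb, of v] by simp
    also have "\<dots> = (\<Sum>i<CARD('n). (q i \<bullet> v) *\<^sub>R (lam i *\<^sub>R q i))"
      using eig by (simp add: vec.sum matrix_vector_mult_scaleR)
    also have "\<dots> = (\<Sum>i<CARD('n). lam i *\<^sub>R outer (q i)) *v v"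
      by (simp add: sum_scaleR_mulv outer_mulv mult.commute)
    finally show "X *v v = (\<Sum>i<CARD('n). lam i *\<^sub>R outer (q i)) *v v" .
  qed
  then show ?thesis using that onb mono by blast
qed

lemma spec_mulv: "(\<Sum>i<CARD('n). lam i *\<^sub>R outer (q i)) *v v = (\<Sum>i<CARD('n). (lam i * (q i \<bullet> v)) *\<^sub>R q i)"
  for q :: "nat \<Rightarrow> real^'n::finite"
  by (simp add: sum_scaleR_mulv outer_mulv)

lemma spec_quad: "v \<bullet> ((\<Sum>i<CARD('n). lam i *\<^sub>R outer (q i)) *v v) = (\<Sum>i<CARD('n). lam i * (q i \<bullet> v)^2)"
  for q :: "nat \<Rightarrow> real^'n::finite"
  by (simp add: spec_mulv inner_sum_right power2_eq_square inner_commute mult.assoc)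

lemma spec_eig:
  fixes q :: "nat \<Rightarrow> real^'n::finite"
  assumes "onb q" "k < CARD('n)"
  shows "(\<Sum>i<CARD('n). lam i *\<^sub>R outer (q i)) *v q k = lam k *\<^sub>R q k"
proof -
  have "(\<Sum>i<CARD('n). lam i *\<^sub>R outer (q i)) *v q k = (\<Sum>i<CARD('n). (if i = k then lam i else 0) *\<^sub>R q i)"
    unfolding spec_mulv by (rule sum.cong) (use assms in \<open>auto simp: onb_def\<close>)
  also have "\<dots> = (\<Sum>i<CARD('n). (if i = k then lam k *\<^sub>R q k else 0))" by (rule sum.cong) auto
  also have "\<dots> = lam k *\<^sub>R q k" using assms(2) by simp
  finally show ?thesis .
qed

lemma spec_psd_nonneg:
  fixes q :: "nat \<Rightarrow> real^'n::finite"
  assumes "onb q" "psd X" "X = (\<Sum>i<CARD('n). lam i *\<^sub>R outer (q i))" "k < CARD('n)"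
  shows "0 \<le> lam k"
proof -
  have "0 \<le> q k \<bullet> (X *v q k)" using assms(2) by (simp add: psd_def)
  also have "\<dots> = lam k" using spec_eig[OF assms(1,4)] assms(1,3,4) by (simp add: onb_def)
  finally show ?thesis .
qed

lemma det_spec_shift:
  fixes q :: "nat \<Rightarrow> real^'n::finite"
  assumes "onb q"
  shows "det ((\<Sum>i<CARD('n). lam i *\<^sub>R outer (q i)) + t *\<^sub>R mat 1) = (\<Prod>i<CARD('n). lam i + t)"
proof -
  have "t *\<^sub>R (mat 1 :: real^'n^'n) = t *\<^sub>R (\<Sum>i<CARD('n). outer (q i))" by (simp only: onb_sum_outer[OF assms])
  also have "\<dots> = (\<Sum>i<CARD('n). t *\<^sub>R outer (q i))" by (simp add: scaleR_sum_right)
  finally have "(\<Sum>i<CARD('n). lam i *\<^sub>R outer (q i)) + t *\<^sub>R mat 1 = (\<Sum>i<CARD('n). (lam i + t) *\<^sub>R outer (q i))"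
    by (simp add: sum.distrib scaleR_add_left)
  then show ?thesis using det_spec[OF assms] by simp
qed

lemma filter_prefix_desc:
  fixes L :: "real list"
  assumes "sorted (rev L)"
  shows "L = filter (\<lambda>x. 0 < x) L @ drop (length (filter (\<lambda>x. 0 < x) L)) L"
    and "\<And>i. i < length (filter (\<lambda>x. 0 < x) L) \<Longrightarrow> L ! i = filter (\<lambda>x. 0 < x) L ! i"
proof -
  have f: "filter (\<lambda>x. 0 < x) L = takeWhile (\<lambda>x. 0 < x) L"
    using filter_equals_takeWhile_sorted_rev[of id L 0] assms by simp
  show "L = filter (\<lambda>x. 0 < x) L @ drop (length (filter (\<lambda>x. 0 < x) L)) L"
    unfolding f by (metis append_take_drop_id takeWhile_eq_take)
  show "L ! i = filter (\<lambda>x. 0 < x) L ! i" if "i < length (filter (\<lambda>x. 0 < x) L)" for i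
    using that unfolding f by (simp add: takeWhile_nth)
qed

lemma Phi_spec:
  fixes Y :: "real^'n::finite^'n" and d :: "nat \<Rightarrow> real"
  assumes eig: "eig_mset Y = image_mset d (mset_set {..<CARD('n)})"
    and nonneg: "\<And>i. i < CARD('n) \<Longrightarrow> 0 \<le> d i"
    and cnt: "card {i. i < CARD('n) \<and> 0 < d i} = s"
  shows "Phi s Y 0 = ereal (\<Sum>i\<in>{i. i < CARD('n) \<and> 0 < d i}. ln (d i))"
proof -
  define xs where "xs = map d [0..<CARD('n)]"
  have mxs: "mset xs = image_mset d (mset_set {..<CARD('n)})"
    by (simp add: xs_def atLeast0LessThan)
  define L where "L = rev (sort xs)"
  have eL: "eigs_desc Y = L" by (simp add: eigs_desc_def eig mxs[symmetric] L_def)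
  have sL: "sorted (rev L)" by (simp add: L_def)
  have mL: "mset L = mset xs" by (simp add: L_def)
  define P where "P = filter (\<lambda>x. 0 < x) L"
  have mP: "mset P = image_mset d (mset_set {i. i < CARD('n) \<and> 0 < d i})"
  proof -
    have "mset P = filter_mset (\<lambda>x. 0 < x) (mset xs)" by (simp add: P_def mL[symmetric])
    also have "\<dots> = image_mset d (filter_mset (\<lambda>i. 0 < d i) (mset_set {..<CARD('n)}))"
      by (simp add: mxs filter_mset_image_mset)
    also have "\<dots> = image_mset d (mset_set {i. i < CARD('n) \<and> 0 < d i})"
      by (simp add: filter_mset_mset_set)
    finally show ?thesis .
  qed
  have lP: "length P = s"
  proof -
    have "length P = size (mset P)" by simp
    also have "\<dots> = card {i. i < CARD('n) \<and> 0 < d i}" by (simp add: mP)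
    finally show ?thesis using cnt by simp
  qed
  have nth: "L ! i = P ! i" if "i < s" for i
    using filter_prefix_desc(2)[OF sL, of i] that lP by (simp add: P_def)
  have pos: "0 < L ! i" if "i < s" for i
  proof -
    have "P ! i \<in> set P" using that lP by simp
    then show ?thesis using nth[OF that] by (simp add: P_def)
  qed
  have "(\<Sum>i<s. ln (L ! i)) = (\<Sum>i<length P. ln (P ! i))" using nth lP by simp
  also have "\<dots> = sum_list (map ln P)" by (simp add: sum_list_sum_nth atLeast0LessThan)
  also have "\<dots> = sum_mset (image_mset ln (mset P))" by (simp add: sum_mset_sum_list[symmetric])
  also have "\<dots> = (\<Sum>i\<in>{i. i < CARD('n) \<and> 0 < d i}. ln (d i))"
    by (simp add: mP multiset.map_comp o_def sum_unfold_sum_mset)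
  finally have S: "(\<Sum>i<s. ln (L ! i)) = (\<Sum>i\<in>{i. i < CARD('n) \<and> 0 < d i}. ln (d i))" .
  show ?thesis unfolding Phi_def eL using pos S by simp
qed

lemma scalar_KF:
  fixes lam c :: "nat \<Rightarrow> real"
  assumes desc: "\<And>i j. i \<le> j \<Longrightarrow> j < n \<Longrightarrow> lam j \<le> lam i"
    and nn: "\<And>i. i < n \<Longrightarrow> 0 \<le> lam i"
    and c01: "\<And>i. i < n \<Longrightarrow> 0 \<le> c i \<and> c i \<le> 1"
    and cs: "(\<Sum>i<n. c i) \<le> real m" and mn: "m \<le> n"
  shows "(\<Sum>i<n. lam i * c i) \<le> (\<Sum>i<m. lam i)"
proof (cases "m = n")
  case True
  have "(\<Sum>i<n. lam i * c i) \<le> (\<Sum>i<n. lam i)"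
    by (rule sum_mono) (use nn c01 in \<open>auto intro: mult_left_le\<close>)
  then show ?thesis using True by simp
next
  case False
  then have m: "m < n" using mn by simp
  define a where "a = lam m"
  have split: "(\<Sum>i<n. f i) = (\<Sum>i<m. f i) + (\<Sum>i\<in>{m..<n}. f i)" for f :: "nat \<Rightarrow> real"
  proof -
    have "{..<n} = {..<m} \<union> {m..<n}" using m by auto
    then show ?thesis by (simp add: sum.union_disjoint ivl_disj_int)
  qed
  have h1: "lam i * (c i - 1) \<le> a * (c i - 1)" if "i < m" for i
  proof -
    have "a \<le> lam i" using desc[of i m] that m by (simp add: a_def)
    moreover have "c i - 1 \<le> 0" using c01[of i] that m by simp
    ultimately show ?thesis by (simp add: mult_right_mono_neg)
  qed
  have h2: "lam i * c i \<le> a * c i" if "i \<in> {m..<n}" for i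
  proof -
    have "lam i \<le> a" using desc[of m i] that by (simp add: a_def)
    moreover have "0 \<le> c i" using c01[of i] that by simp
    ultimately show ?thesis by (simp add: mult_right_mono)
  qed
  have "(\<Sum>i<n. lam i * c i) - (\<Sum>i<m. lam i) = (\<Sum>i<m. lam i * (c i - 1)) + (\<Sum>i\<in>{m..<n}. lam i * c i)"
    by (simp add: split algebra_simps sum_subtractf)
  also have "\<dots> \<le> (\<Sum>i<m. a * (c i - 1)) + (\<Sum>i\<in>{m..<n}. a * c i)"
    by (intro add_mono sum_mono h1 h2) auto
  also have "\<dots> = a * ((\<Sum>i<n. c i) - real m)"
    by (simp add: split algebra_simps sum_subtractf sum_distrib_left)
  also have "\<dots> \<le> 0"
    using cs nn[OF m] by (simp add: a_def mult_nonneg_nonpos)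
  finally show ?thesis by simp
qed

definition orthset :: "'a::real_inner set \<Rightarrow> bool" where
  "orthset B \<longleftrightarrow> finite B \<and> (\<forall>b\<in>B. \<forall>b'\<in>B. b \<bullet> b' = (if b = b' then 1 else 0))"

lemma span_parseval:
  fixes B :: "'a::real_inner set"
  assumes "orthset B" "y \<in> span B"
  shows "y \<bullet> y = (\<Sum>b\<in>B. (b \<bullet> y)^2)"
proof -
  have fin: "finite B" using assms(1) by (simp add: orthset_def)
  obtain u where y: "y = (\<Sum>b\<in>B. u b *\<^sub>R b)" using assms(2) span_finite[OF fin] by auto
  have coef: "b \<bullet> y = u b" if "b \<in> B" for b
  proof -
    have "b \<bullet> y = (\<Sum>b'\<in>B. u b' * (if b = b' then 1 else 0))"
      using assms(1) that by (simp add: y inner_sum_right orthset_def)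
    also have "\<dots> = u b" using fin that by (simp add: if_distrib sum.delta cong: if_cong)
    finally show ?thesis .
  qed
  have "y \<bullet> y = (\<Sum>b\<in>B. u b * (b \<bullet> y))" by (subst (1) y) (simp add: inner_sum_left)
  also have "\<dots> = (\<Sum>b\<in>B. (b \<bullet> y)^2)" by (rule sum.cong) (auto simp: coef power2_eq_square)
  finally show ?thesis .
qed

lemma KF2:
  fixes y :: "'i \<Rightarrow> 'a::euclidean_space"
  assumes fin: "finite I"
    and dom: "\<And>v. (\<Sum>i\<in>I. (y i \<bullet> v)^2) \<le> Q v"
  obtains B where "orthset B" "card B \<le> card I" "(\<Sum>i\<in>I. y i \<bullet> y i) \<le> (\<Sum>b\<in>B. Q b)"
proof -
  obtain B where B: "B \<subseteq> span (y ` I)" "pairwise orthogonal B" "\<And>x. x \<in> B \<Longrightarrow> norm x = 1"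
    "independent B" "card B = dim (span (y ` I))" "span B = span (y ` I)"
    using orthonormal_basis_subspace[of "span (y ` I)"] by auto
  have finB: "finite B" using B(4) by (rule finiteI_independent)
  have oB: "orthset B"
    using B(2,3) finB by (auto simp: orthset_def pairwise_def orthogonal_def dot_square_norm)
  have cB: "card B \<le> card I"
  proof -
    have "card B = dim (y ` I)" using B(5) by simp
    also have "\<dots> \<le> card (y ` I)" by (rule dim_le_card) (use fin in \<open>auto intro: span_base\<close>)
    also have "\<dots> \<le> card I" using fin by (rule card_image_le)
    finally show ?thesis .
  qed
  have "(\<Sum>i\<in>I. y i \<bullet> y i) = (\<Sum>i\<in>I. \<Sum>b\<in>B. (b \<bullet> y i)^2)"
  proof (rule sum.cong)
    fix i assume "i \<in> I"
    then have "y i \<in> span B" using B(6) by (auto intro: span_base)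
    then show "y i \<bullet> y i = (\<Sum>b\<in>B. (b \<bullet> y i)^2)" using span_parseval[OF oB] by simp
  qed simp
  also have "\<dots> = (\<Sum>b\<in>B. \<Sum>i\<in>I. (y i \<bullet> b)^2)" by (subst sum.swap) (simp add: inner_commute)
  also have "\<dots> \<le> (\<Sum>b\<in>B. Q b)" by (rule sum_mono) (rule dom)
  finally show ?thesis using that oB cB by blast
qed

lemma KF:
  fixes p :: "nat \<Rightarrow> real^'n::finite"
  assumes onb: "onb p"
    and desc: "\<And>i j. i \<le> j \<Longrightarrow> j < CARD('n) \<Longrightarrow> mu j \<le> mu i"
    and nn: "\<And>i. i < CARD('n) \<Longrightarrow> 0 \<le> mu i"
    and oB: "orthset B" and cB: "card B \<le> m" and mn: "m \<le> CARD('n)"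
  shows "(\<Sum>b\<in>B. \<Sum>k<CARD('n). mu k * (p k \<bullet> b)^2) \<le> (\<Sum>k<m. mu k)"
proof -
  have finB: "finite B" using oB by (simp add: orthset_def)
  define c where "c k = (\<Sum>b\<in>B. (p k \<bullet> b)^2)" for k
  have c01: "0 \<le> c k \<and> c k \<le> 1" if "k < CARD('n)" for k
  proof
    show "0 \<le> c k" by (simp add: c_def sum_nonneg)
    have "c k = (\<Sum>b\<in>B. (id b \<bullet> p k)^2)" by (simp add: c_def inner_commute)
    also have "\<dots> \<le> p k \<bullet> p k"
      by (rule orthonormal_bessel) (use oB in \<open>auto simp: orthset_def\<close>)
    also have "\<dots> = 1" using onb that by (simp add: onb_def)
    finally show "c k \<le> 1" .
  qed
  have cs: "(\<Sum>k<CARD('n). c k) \<le> real m"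
  proof -
    have "(\<Sum>k<CARD('n). c k) = (\<Sum>b\<in>B. \<Sum>k<CARD('n). (p k \<bullet> b)^2)"
      unfolding c_def by (rule sum.swap)
    also have "\<dots> = (\<Sum>b\<in>B. 1)"
    proof (rule sum.cong)
      fix b assume "b \<in> B"
      then have "b \<bullet> b = 1" using oB by (simp add: orthset_def)
      then show "(\<Sum>k<CARD('n). (p k \<bullet> b)^2) = 1" using onb_parseval[OF onb, of b] by simp
    qed simp
    also have "\<dots> = real (card B)" by simp
    finally show ?thesis using cB by simp
  qed
  have "(\<Sum>b\<in>B. \<Sum>k<CARD('n). mu k * (p k \<bullet> b)^2) = (\<Sum>k<CARD('n). mu k * c k)"
    by (subst sum.swap) (simp add: c_def sum_distrib_left)
  also have "\<dots> \<le> (\<Sum>k<m. mu k)"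
    by (rule scalar_KF[OF desc nn c01 cs mn]) auto
  finally show ?thesis .
qed

lemma Mof_mulv: "M_of A x *v v = (\<Sum>i\<in>UNIV. (x $ i * (column i A \<bullet> v)) *\<^sub>R column i A)"
  by (simp add: M_of_def sum_scaleR_mulv outer_mulv)

lemma Mof_quad: "v \<bullet> (M_of A x *v v) = (\<Sum>i\<in>UNIV. x $ i * (column i A \<bullet> v)^2)"
  by (simp add: M_of_def sum_scaleR_mulv inner_sum_right inner_outer)

lemma Mof_sym: "symmetric_mat (M_of A x)"
  by (simp add: symmetric_mat_def M_of_def vec_eq_iff transpose_def outer_def mult.commute)

lemma Mof_psd: "(\<And>i. 0 \<le> x $ i) \<Longrightarrow> psd (M_of A x)"
  by (simp add: psd_def Mof_sym Mof_quad sum_nonneg)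

lemma mulv_inner: "(A *v w) \<bullet> v = w \<bullet> (transpose A *v v)" for A :: "real^'n::finite^'m::finite"
proof -
  have "w \<bullet> (transpose A *v v) = (v v* A) \<bullet> w" by (simp add: transpose_matrix_vector inner_commute)
  also have "\<dots> = v \<bullet> (A *v w)" by (rule dot_lmul_matrix)
  finally show ?thesis by (simp add: inner_commute)
qed

lemma normA: "(A *v w) \<bullet> (A *v w) = w \<bullet> ((transpose A ** A) *v w)" for A :: "real^'n::finite^'m::finite"
  by (simp add: mulv_inner matrix_vector_mul_assoc)

lemma transpose_mulv_nth: "(transpose A *v v) $ i = column i A \<bullet> v" for A :: "real^'n::finite^'m::finite"
  by (simp add: matrix_vector_mult_def transpose_def column_def inner_vec_def mult.commute)

lemma vmulm_nth: "(v v* A) $ i = column i A \<bullet> v" for A :: "real^'n::finite^'m::finite"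
  by (simp add: vector_matrix_mult_def column_def inner_vec_def mult.commute)

lemma mulv_col: "(A *v w) = (\<Sum>i\<in>UNIV. w $ i *\<^sub>R column i A)" for A :: "real^'n::finite^'m::finite"
  by (simp add: matrix_mult_sum scalar_mult_eq_scaleR)

lemma scaled_id_mulv: "(t *\<^sub>R mat 1) *v u = t *\<^sub>R (u :: real^'n::finite)"
  by (metis matrix_vector_mul_lid scaleR_matrix_vector_assoc)

lemma spec_diag:
  fixes q :: "nat \<Rightarrow> real^'n::finite"
  assumes "onb q" "X = (\<Sum>i<CARD('n). lam i *\<^sub>R outer (q i))" "k < CARD('n)"
  shows "q k \<bullet> (X *v q k) = lam k"
  using spec_eig[OF assms(1,3)] assms by (simp add: onb_def)

lemma partial_sums:
  fixes A0 At :: "real^'n::finite^'n" and x :: "real^'n"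
  assumes CA: "transpose A0 ** A0 = transpose At ** At + t *\<^sub>R mat 1"
    and x01: "\<And>i. 0 \<le> x $ i \<and> x $ i \<le> 1" and t0: "0 \<le> t"
    and q: "onb q" and M0: "M_of A0 x = (\<Sum>i<CARD('n). lam i *\<^sub>R outer (q i))"
    and p: "onb p" and Mt: "M_of At x = (\<Sum>i<CARD('n). mu i *\<^sub>R outer (p i))"
    and mud: "\<And>i j. i \<le> j \<Longrightarrow> j < CARD('n) \<Longrightarrow> mu j \<le> mu i"
    and mun: "\<And>i. i < CARD('n) \<Longrightarrow> 0 \<le> mu i"
    and mn: "m \<le> CARD('n)"
  shows "(\<Sum>k<m. lam k) \<le> (\<Sum>k<m. mu k) + real m * t"
proof -
  define sx where "sx i = sqrt (x $ i)" for i
  have sx2: "sx i * sx i = x $ i" for i using x01[of i] by (simp add: sx_def)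
  have sxa: "sx i * a * (sx i * a) = x $ i * (a * a)" for i a
  proof -
    have "sx i * a * (sx i * a) = (sx i * sx i) * (a * a)" by (simp add: mult_ac)
    then show ?thesis by (simp add: sx2)
  qed
  define w where "w v = (\<chi> i. sx i * v $ i)" for v :: "real^'n"
  define y where "y k = (\<chi> i. sx i * (column i A0 \<bullet> q k))" for k
  have lamk: "lam k = y k \<bullet> y k" if "k < m" for k
  proof -
    have "lam k = q k \<bullet> (M_of A0 x *v q k)" using spec_diag[OF q M0] that mn by simp
    also have "\<dots> = (\<Sum>i\<in>UNIV. x $ i * (column i A0 \<bullet> q k)^2)" by (rule Mof_quad)
    also have "\<dots> = y k \<bullet> y k"
      by (simp add: y_def inner_vec_def power2_eq_square sxa)
    finally show ?thesis .
  qed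
  have yv: "y k \<bullet> v = q k \<bullet> (A0 *v w v)" for k v
    by (simp add: y_def w_def inner_vec_def mulv_col inner_sum_right sum_distrib_left mult_ac) (rule sum.swap)
  have Aw: "(A0 *v w v) \<bullet> (A0 *v w v) = (At *v w v) \<bullet> (At *v w v) + t * (w v \<bullet> w v)" for v
    by (simp add: normA CA matrix_vector_mult_add_rdistrib inner_add_right scaled_id_mulv)
  define Q1 where "Q1 v = (At *v w v) \<bullet> (At *v w v) + t * (w v \<bullet> w v)" for v
  have dom1: "(\<Sum>k\<in>{..<m}. (y k \<bullet> v)^2) \<le> Q1 v" for v
  proof -
    have "(\<Sum>k\<in>{..<m}. (y k \<bullet> v)^2) = (\<Sum>k\<in>{..<m}. (q k \<bullet> (A0 *v w v))^2)" by (simp add: yv)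
    also have "\<dots> \<le> (A0 *v w v) \<bullet> (A0 *v w v)"
      by (rule orthonormal_bessel) (use q mn in \<open>auto simp: onb_def\<close>)
    finally show ?thesis using Aw by (simp add: Q1_def)
  qed
  obtain B where oB: "orthset B" and cB: "card B \<le> card {..<m}"
    and S1: "(\<Sum>k\<in>{..<m}. y k \<bullet> y k) \<le> (\<Sum>b\<in>B. Q1 b)"
    using KF2[of "{..<m}" y Q1] dom1 by auto
  have finB: "finite B" using oB by (simp add: orthset_def)
  have wb: "w b \<bullet> w b \<le> 1" if "b \<in> B" for b
  proof -
    have "w b \<bullet> w b = (\<Sum>i\<in>UNIV. x $ i * (b $ i)^2)"
      by (simp add: w_def inner_vec_def power2_eq_square sxa)
    also have "\<dots> \<le> (\<Sum>i\<in>UNIV. (b $ i)^2)"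
      by (rule sum_mono) (use x01 in \<open>auto intro: mult_left_le_one_le\<close>)
    also have "\<dots> = b \<bullet> b" by (simp add: inner_vec_def power2_eq_square)
    also have "\<dots> = 1" using oB that by (simp add: orthset_def)
    finally show ?thesis .
  qed
  define u where "u b = At *v w b" for b
  define z where "z v = (\<chi> i. sx i * (column i At \<bullet> v))" for v
  have ub: "u b \<bullet> v = b \<bullet> z v" for b v
  proof -
    have "u b \<bullet> v = w b \<bullet> (transpose At *v v)" by (simp only: u_def mulv_inner)
    also have "\<dots> = b \<bullet> z v" by (simp add: w_def z_def inner_vec_def transpose_mulv_nth vmulm_nth mult_ac)
    finally show ?thesis .
  qed
  define Q2 where "Q2 v = (\<Sum>k<CARD('n). mu k * (p k \<bullet> v)^2)" for v
  have dom2: "(\<Sum>b\<in>B. (u b \<bullet> v)^2) \<le> Q2 v" for v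
  proof -
    have "(\<Sum>b\<in>B. (u b \<bullet> v)^2) = (\<Sum>b\<in>B. (id b \<bullet> z v)^2)" by (simp add: ub)
    also have "\<dots> \<le> z v \<bullet> z v"
      by (rule orthonormal_bessel) (use oB in \<open>auto simp: orthset_def\<close>)
    also have "\<dots> = (\<Sum>i\<in>UNIV. x $ i * (column i At \<bullet> v)^2)"
      by (simp add: z_def inner_vec_def power2_eq_square sxa)
    also have "\<dots> = v \<bullet> (M_of At x *v v)" by (rule Mof_quad[symmetric])
    also have "\<dots> = Q2 v" by (simp add: Mt spec_quad Q2_def)
    finally show ?thesis .
  qed
  obtain B' where oB': "orthset B'" and cB': "card B' \<le> card B"
    and S2: "(\<Sum>b\<in>B. u b \<bullet> u b) \<le> (\<Sum>b\<in>B'. Q2 b)"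
    using KF2[of B u Q2] dom2 finB by auto
  have cBm: "card B \<le> m" using cB by simp
  have S3: "(\<Sum>b\<in>B'. Q2 b) \<le> (\<Sum>k<card B. mu k)"
    unfolding Q2_def by (rule KF[OF p mud mun oB' cB']) (use cBm mn in auto)
  have S4: "(\<Sum>k<card B. mu k) \<le> (\<Sum>k<m. mu k)"
    by (rule sum_mono2) (use cBm mun mn in auto)
  have "(\<Sum>k<m. lam k) = (\<Sum>k\<in>{..<m}. y k \<bullet> y k)" by (rule sum.cong) (auto simp: lamk)
  also have "\<dots> \<le> (\<Sum>b\<in>B. Q1 b)" by (rule S1)
  also have "\<dots> = (\<Sum>b\<in>B. u b \<bullet> u b) + t * (\<Sum>b\<in>B. w b \<bullet> w b)"
    by (simp add: Q1_def u_def sum.distrib sum_distrib_left)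
  also have "\<dots> \<le> (\<Sum>k<m. mu k) + t * real (card B)"
  proof (rule add_mono)
    show "(\<Sum>b\<in>B. u b \<bullet> u b) \<le> (\<Sum>k<m. mu k)" using S2 S3 S4 by linarith
    have "(\<Sum>b\<in>B. w b \<bullet> w b) \<le> (\<Sum>b\<in>B. 1)" by (rule sum_mono) (rule wb)
    then show "t * (\<Sum>b\<in>B. w b \<bullet> w b) \<le> t * real (card B)" using t0 by (simp add: mult_left_mono)
  qed
  also have "\<dots> \<le> (\<Sum>k<m. mu k) + real m * t" using cBm t0 by (simp add: mult.commute mult_left_mono)
  finally show ?thesis .
qed

lemma abel_nonpos:
  fixes c d :: "nat \<Rightarrow> real"
  assumes s1: "1 \<le> s" and cm: "\<And>i j. i \<le> j \<Longrightarrow> j < s \<Longrightarrow> c i \<le> c j"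
    and D: "\<And>j. j \<le> s \<Longrightarrow> 0 \<le> (\<Sum>k<j. d k)" and Ds: "(\<Sum>k<s. d k) = 0"
  shows "(\<Sum>k<s. c k * d k) \<le> 0"
proof -
  have gen: "1 \<le> j \<Longrightarrow> j \<le> s \<Longrightarrow> (\<Sum>k<j. c k * d k) \<le> c (j - 1) * (\<Sum>k<j. d k)" for j
  proof (induction j)
    case 0 then show ?case by simp
  next
    case (Suc j)
    show ?case
    proof (cases "j = 0")
      case True then show ?thesis by simp
    next
      case False
      then have IH: "(\<Sum>k<j. c k * d k) \<le> c (j - 1) * (\<Sum>k<j. d k)" using Suc by simp
      have "c (j - 1) * (\<Sum>k<j. d k) \<le> c j * (\<Sum>k<j. d k)"
        using cm[of "j - 1" j] D[of j] Suc.prems by (intro mult_right_mono) auto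
      then have "(\<Sum>k<Suc j. c k * d k) \<le> c j * (\<Sum>k<j. d k) + c j * d j" using IH by simp
      also have "\<dots> = c (Suc j - 1) * (\<Sum>k<Suc j. d k)" by (simp add: algebra_simps)
      finally show ?thesis .
    qed
  qed
  have "(\<Sum>k<s. c k * d k) \<le> c (s - 1) * (\<Sum>k<s. d k)" using gen[OF s1] by simp
  then show ?thesis using Ds by simp
qed

lemma log_majorization:
  fixes rho nu :: "nat \<Rightarrow> real"
  assumes s1: "1 \<le> s"
    and rd: "\<And>i j. i \<le> j \<Longrightarrow> j < s \<Longrightarrow> rho j \<le> rho i"
    and rp: "\<And>k. k < s \<Longrightarrow> 0 < rho k" and np: "\<And>k. k < s \<Longrightarrow> 0 < nu k"
    and ps: "\<And>j. j \<le> s \<Longrightarrow> (\<Sum>k<j. rho k) \<le> (\<Sum>k<j. nu k)"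
    and tot: "(\<Sum>k<s. rho k) = (\<Sum>k<s. nu k)"
  shows "(\<Sum>k<s. ln (nu k)) \<le> (\<Sum>k<s. ln (rho k))"
proof -
  have "(\<Sum>k<s. ln (nu k)) - (\<Sum>k<s. ln (rho k)) = (\<Sum>k<s. ln (nu k / rho k))"
  proof -
    have a: "nu k \<noteq> 0" "rho k \<noteq> 0" if "k < s" for k using rp[OF that] np[OF that] by auto
    show ?thesis by (simp add: sum_subtractf[symmetric]) (rule sum.cong, auto simp: ln_div a)
  qed
  also have "\<dots> \<le> (\<Sum>k<s. nu k / rho k - 1)"
    by (rule sum_mono) (simp add: ln_le_minus_one rp np)
  also have "\<dots> = (\<Sum>k<s. (1 / rho k) * (nu k - rho k))"
    by (rule sum.cong) (auto simp: field_simps rp[THEN less_imp_neq, symmetric])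
  also have "\<dots> \<le> 0"
  proof (rule abel_nonpos[OF s1])
    fix i j assume "i \<le> j" "j < s"
    then show "1 / rho i \<le> 1 / rho j" using rd[of i j] rp[of j] by (simp add: frac_le)
  next
    fix j assume "j \<le> s"
    then show "0 \<le> (\<Sum>k<j. nu k - rho k)" using ps[of j] by (simp add: sum_subtractf)
  next
    show "(\<Sum>k<s. nu k - rho k) = 0" using tot by (simp add: sum_subtractf)
  qed
  finally show ?thesis by simp
qed

lemma avg_desc:
  fixes nu :: "nat \<Rightarrow> real"
  assumes aj: "a \<le> j" and jb: "j \<le> b" and dsc: "\<And>i l. a \<le> i \<Longrightarrow> i \<le> l \<Longrightarrow> l < b \<Longrightarrow> nu l \<le> nu i"
  shows "real (j - a) * (\<Sum>k\<in>{a..<b}. nu k) \<le> real (b - a) * (\<Sum>k\<in>{a..<j}. nu k)"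
proof (cases "j = b")
  case True then show ?thesis by simp
next
  case False
  then have jb': "j < b" using jb by simp
  define v where "v = nu j"
  have s1: "real (j - a) * v \<le> (\<Sum>k\<in>{a..<j}. nu k)"
  proof -
    have "(\<Sum>k\<in>{a..<j}. v) \<le> (\<Sum>k\<in>{a..<j}. nu k)"
      by (rule sum_mono) (use dsc jb' in \<open>auto simp: v_def\<close>)
    then show ?thesis by simp
  qed
  have s2: "(\<Sum>k\<in>{j..<b}. nu k) \<le> real (b - j) * v"
  proof -
    have "(\<Sum>k\<in>{j..<b}. nu k) \<le> (\<Sum>k\<in>{j..<b}. v)"
      by (rule sum_mono) (use dsc aj in \<open>auto simp: v_def\<close>)
    then show ?thesis by simp
  qed
  have split: "(\<Sum>k\<in>{a..<b}. nu k) = (\<Sum>k\<in>{a..<j}. nu k) + (\<Sum>k\<in>{j..<b}. nu k)"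
    using aj jb by (simp add: sum.atLeastLessThan_concat)
  have ba: "real (b - a) = real (j - a) + real (b - j)" using aj jb by simp
  have "real (j - a) * (\<Sum>k\<in>{j..<b}. nu k) \<le> real (j - a) * (real (b - j) * v)"
    using s2 by (simp add: mult_left_mono)
  also have "\<dots> = real (b - j) * (real (j - a) * v)" by simp
  also have "\<dots> \<le> real (b - j) * (\<Sum>k\<in>{a..<j}. nu k)" using s1 by (simp add: mult_left_mono)
  finally have "real (j - a) * (\<Sum>k\<in>{j..<b}. nu k) \<le> real (b - j) * (\<Sum>k\<in>{a..<j}. nu k)" .
  then show ?thesis unfolding split ba by (simp add: algebra_simps)
qed

lemma split_lessThan: "a \<le> b \<Longrightarrow> (\<Sum>k<b. f k) = (\<Sum>k<a. f k) + (\<Sum>k\<in>{a..<b}. f k)"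
  for f :: "nat \<Rightarrow> real"
proof -
  assume "a \<le> b"
  then have "{..<b} = {..<a} \<union> {a..<b}" by auto
  then show ?thesis by (simp add: sum.union_disjoint ivl_disj_int)
qed

lemma scalar_main:
  fixes lam mu :: "nat \<Rightarrow> real" and t :: real and s n :: nat
  assumes s1: "1 \<le> s" and sn: "s \<le> n" and t0: "0 < t"
    and ld: "\<And>i j. i \<le> j \<Longrightarrow> j < n \<Longrightarrow> lam j \<le> lam i" and ln0: "\<And>i. i < n \<Longrightarrow> 0 \<le> lam i"
    and md: "\<And>i j. i \<le> j \<Longrightarrow> j < n \<Longrightarrow> mu j \<le> mu i" and mn0: "\<And>i. i < n \<Longrightarrow> 0 \<le> mu i"
    and part: "\<And>m. m \<le> s \<Longrightarrow> (\<Sum>k<m. lam k) \<le> (\<Sum>k<m. mu k) + real m * t"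
    and tot: "(\<Sum>k<n. lam k) = (\<Sum>k<s. mu k) + real s * t"
  obtains k0 where "k0 < s" "0 < (\<Sum>j\<in>{k0..<n}. lam j)"
    "\<And>j. j < k0 \<Longrightarrow> 0 < lam j"
    "\<And>j. k0 \<le> j \<Longrightarrow> j < n \<Longrightarrow> lam j * real (s - k0) \<le> (\<Sum>j\<in>{k0..<n}. lam j)"
    "(\<Sum>k<s. ln (mu k + t)) \<le> (\<Sum>k<k0. ln (lam k)) + real (s - k0) * ln ((\<Sum>j\<in>{k0..<n}. lam j) / real (s - k0))"
proof -
  define tau where "tau k = (\<Sum>j\<in>{k..<n}. lam j)" for k
  define P where "P k \<longleftrightarrow> real (s - k) * lam k \<le> tau k" for k
  have Ps: "P (s - 1)"
  proof -
    have "s - 1 < n" using s1 sn by simp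
    then have "tau (s - 1) = lam (s - 1) + (\<Sum>j\<in>{s..<n}. lam j)"
      unfolding tau_def using s1 by (subst sum.atLeast_Suc_lessThan) auto
    moreover have "0 \<le> (\<Sum>j\<in>{s..<n}. lam j)" by (rule sum_nonneg) (use ln0 in auto)
    ultimately show ?thesis using s1 by (simp add: P_def)
  qed
  define k0 where "k0 = (LEAST k. P k)"
  have Pk0: "P k0" unfolding k0_def using Ps by (rule LeastI)
  have k0s: "k0 < s" using Least_le[of P, OF Ps] s1 by (simp add: k0_def)
  define m where "m = s - k0"
  have m1: "1 \<le> m" using k0s by (simp add: m_def)
  have mpos: "0 < real m" using m1 by simp
  define T where "T = tau k0"
  define nu where "nu k = mu k + t" for k
  define L where "L = (\<Sum>k<k0. lam k)"
  have totL: "(\<Sum>k<n. lam k) = L + T"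
    unfolding L_def T_def tau_def using k0s sn by (intro split_lessThan) simp
  have nus: "(\<Sum>k<s. nu k) = (\<Sum>k<s. mu k) + real s * t" by (simp add: nu_def sum.distrib)
  have nupart: "(\<Sum>k<j. nu k) = (\<Sum>k<j. mu k) + real j * t" for j by (simp add: nu_def sum.distrib)
  define A where "A = (\<Sum>k<k0. nu k)"
  have LA: "L \<le> A" using part[of k0] k0s by (simp add: L_def A_def nupart)
  have nu_pos: "0 < nu k" if "k < n" for k using mn0[OF that] t0 by (simp add: nu_def)
  have tailnu: "(\<Sum>k<s. nu k) = A + (\<Sum>k\<in>{k0..<s}. nu k)"
    unfolding A_def using k0s by (intro split_lessThan) simp
  have tailpos: "0 < (\<Sum>k\<in>{k0..<s}. nu k)"
    using k0s sn nu_pos by (intro sum_pos) auto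
  have LT: "L + T = (\<Sum>k<s. nu k)" using totL tot nus by simp
  have Tpos: "0 < T" using LT tailnu tailpos LA by linarith
  have lamT: "lam j * real m \<le> T" if "k0 \<le> j" "j < n" for j
  proof -
    have "lam j \<le> lam k0" using ld that by simp
    then have "lam j * real m \<le> lam k0 * real m" by (simp add: mult_right_mono)
    also have "\<dots> \<le> T" using Pk0 by (simp add: P_def T_def m_def mult.commute)
    finally show ?thesis .
  qed
  have lam_big: "T / real m < lam j" if "j < k0" for j
  proof -
    have nP: "\<not> P (k0 - 1)" using that by (intro not_less_Least) (auto simp: k0_def)
    have k0n: "k0 - 1 < n" using that k0s sn by simp
    have tk: "tau (k0 - 1) = lam (k0 - 1) + T"
      unfolding tau_def T_def using that k0s sn by (subst sum.atLeast_Suc_lessThan) (auto simp: Suc_diff_1)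
    have "real (s - (k0 - 1)) = real m + 1" using that k0s by (simp add: m_def)
    then have "(real m + 1) * lam (k0 - 1) > lam (k0 - 1) + T" using nP tk by (simp add: P_def)
    then have "real m * lam (k0 - 1) > T" by (simp add: algebra_simps)
    then have "T / real m < lam (k0 - 1)" using mpos by (simp add: divide_less_eq mult.commute)
    also have "lam (k0 - 1) \<le> lam j" using ld[of j "k0 - 1"] that k0n by simp
    finally show ?thesis .
  qed
  define rho where "rho k = (if k < k0 then lam k else T / real m)" for k
  have lam_pos: "0 < lam j" if "j < k0" for j
    using lam_big[OF that] Tpos mpos by (meson divide_pos_pos less_trans)
  have rpos: "0 < rho k" for k
    using lam_pos Tpos mpos by (auto simp: rho_def)
  have maj: "(\<Sum>k<s. ln (nu k)) \<le> (\<Sum>k<s. ln (rho k))"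
  proof (rule log_majorization[OF s1])
    fix i j assume ij: "i \<le> j" "j < s"
    show "rho j \<le> rho i"
    proof (cases "j < k0")
      case True then show ?thesis using ij ld[of i j] sn by (simp add: rho_def)
    next
      case False
      then show ?thesis using lam_big[of i] by (cases "i < k0") (auto simp: rho_def)
    qed
  next
    fix k assume "k < s" show "0 < rho k" by (rule rpos)
  next
    fix k assume "k < s" then show "0 < nu k" using nu_pos sn by simp
  next
    fix j assume js: "j \<le> s"
    show "(\<Sum>k<j. rho k) \<le> (\<Sum>k<j. nu k)"
    proof (cases "j \<le> k0")
      case True
      then have "(\<Sum>k<j. rho k) = (\<Sum>k<j. lam k)" by (intro sum.cong) (auto simp: rho_def)
      also have "\<dots> \<le> (\<Sum>k<j. nu k)" using part[OF js] by (simp add: nupart)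
      finally show ?thesis .
    next
      case False
      then have kj: "k0 \<le> j" by simp
      have r1: "(\<Sum>k<j. rho k) = L + real (j - k0) * (T / real m)"
      proof -
        have "(\<Sum>k<j. rho k) = (\<Sum>k<k0. rho k) + (\<Sum>k\<in>{k0..<j}. rho k)" using kj by (rule split_lessThan)
        also have "(\<Sum>k<k0. rho k) = L" unfolding L_def by (intro sum.cong) (auto simp: rho_def)
        also have "(\<Sum>k\<in>{k0..<j}. rho k) = real (j - k0) * (T / real m)" by (simp add: rho_def)
        finally show ?thesis .
      qed
      have n1: "(\<Sum>k<j. nu k) = A + (\<Sum>k\<in>{k0..<j}. nu k)"
        unfolding A_def using kj by (rule split_lessThan)
      have av: "real (j - k0) * (\<Sum>k\<in>{k0..<s}. nu k) \<le> real (s - k0) * (\<Sum>k\<in>{k0..<j}. nu k)"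
      proof (rule avg_desc[OF kj js])
        fix i l assume "k0 \<le> i" "i \<le> l" "l < s"
        then show "nu l \<le> nu i" using md[of i l] sn by (simp add: nu_def)
      qed
      have tl: "(\<Sum>k\<in>{k0..<s}. nu k) = L + T - A" using LT tailnu by simp
      define a where "a = real (j - k0)"
      have am: "a \<le> real m" using js by (simp add: a_def m_def)
      have a0: "0 \<le> a" by (simp add: a_def)
      have "real m * (L + a * (T / real m)) = real m * L + a * T" using mpos by (simp add: field_simps)
      also have "\<dots> \<le> real m * A + a * (L + T - A)"
      proof -
        have "(real m - a) * L \<le> (real m - a) * A" using am LA by (intro mult_left_mono) auto
        then show ?thesis by (simp add: algebra_simps)
      qed
      also have "\<dots> \<le> real m * A + real m * (\<Sum>k\<in>{k0..<j}. nu k)"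
        using av tl by (simp add: a_def m_def)
      also have "\<dots> = real m * (\<Sum>k<j. nu k)" by (simp add: n1 algebra_simps)
      finally have "real m * (L + a * (T / real m)) \<le> real m * (\<Sum>k<j. nu k)" .
      then have "L + a * (T / real m) \<le> (\<Sum>k<j. nu k)" using mpos by simp
      then show ?thesis using r1 by (simp add: a_def)
    qed
  next
    have "(\<Sum>k<s. rho k) = (\<Sum>k<k0. rho k) + (\<Sum>k\<in>{k0..<s}. rho k)" using k0s by (intro split_lessThan) simp
    also have "(\<Sum>k<k0. rho k) = L" unfolding L_def by (intro sum.cong) (auto simp: rho_def)
    also have "(\<Sum>k\<in>{k0..<s}. rho k) = T" using mpos by (simp add: rho_def m_def)
    finally show "(\<Sum>k<s. rho k) = (\<Sum>k<s. nu k)" using LT by simp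
  qed
  have rhs: "(\<Sum>k<s. ln (rho k)) = (\<Sum>k<k0. ln (lam k)) + real m * ln (T / real m)"
  proof -
    have "(\<Sum>k<s. ln (rho k)) = (\<Sum>k<k0. ln (rho k)) + (\<Sum>k\<in>{k0..<s}. ln (rho k))"
      using k0s by (intro split_lessThan) simp
    also have "(\<Sum>k<k0. ln (rho k)) = (\<Sum>k<k0. ln (lam k))" by (intro sum.cong) (auto simp: rho_def)
    also have "(\<Sum>k\<in>{k0..<s}. ln (rho k)) = (\<Sum>k\<in>{k0..<s}. ln (T / real m))"
      by (rule sum.cong) (auto simp: rho_def)
    also have "\<dots> = real m * ln (T / real m)" by (simp only: sum_constant card_atLeastLessThan m_def)
    finally show ?thesis .
  qed
  show ?thesis
  proof (rule that[of k0])
    show "k0 < s" by (rule k0s)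
    show "0 < (\<Sum>j\<in>{k0..<n}. lam j)" using Tpos by (simp add: T_def tau_def)
    show "0 < lam j" if "j < k0" for j
      using lam_big[OF that] Tpos mpos by (meson divide_pos_pos less_trans)
    show "lam j * real (s - k0) \<le> (\<Sum>j\<in>{k0..<n}. lam j)" if "k0 \<le> j" "j < n" for j
      using lamT[OF that] by (simp add: m_def T_def tau_def)
    show "(\<Sum>k<s. ln (mu k + t)) \<le> (\<Sum>k<k0. ln (lam k)) + real (s - k0) * ln ((\<Sum>j\<in>{k0..<n}. lam j) / real (s - k0))"
      using maj rhs by (simp add: nu_def m_def T_def tau_def)
  qed
qed

lemma spec_psd_gen:
  fixes q :: "nat \<Rightarrow> real^'n::finite"
  assumes "\<And>j. j < CARD('n) \<Longrightarrow> 0 \<le> d j"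
  shows "psd (\<Sum>j<CARD('n). d j *\<^sub>R outer (q j))"
proof -
  have "symmetric_mat (\<Sum>j<CARD('n). d j *\<^sub>R outer (q j))"
    by (simp add: symmetric_mat_def vec_eq_iff transpose_def outer_def mult.commute)
  moreover have "0 \<le> v \<bullet> ((\<Sum>j<CARD('n). d j *\<^sub>R outer (q j)) *v v)" for v
    unfolding spec_quad using assms by (intro sum_nonneg) auto
  ultimately show ?thesis by (simp add: psd_def)
qed

lemma sum_01:
  fixes c :: "nat \<Rightarrow> real"
  assumes "finite A" "\<And>j. j \<in> A \<Longrightarrow> c j = 0 \<or> c j = 1"
  shows "(\<Sum>j\<in>A. c j) = real (card {j\<in>A. c j = 1})"
proof -
  have "(\<Sum>j\<in>A. c j) = (\<Sum>j\<in>A. if c j = 1 then 1 else 0)"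
    by (rule sum.cong) (use assms(2) in auto)
  also have "\<dots> = real (card {j\<in>A. c j = 1})"
    using assms(1) by (simp add: sum.If_cases Int_def conj_commute)
  finally show ?thesis .
qed

lemma Phi_hat_lower:
  assumes "\<And>g. hypo_concave_on {Y. psd Y} g \<Longrightarrow> (\<forall>Y\<in>{Y. psd Y}. Phi s Y 0 \<le> g Y) \<Longrightarrow> ereal v \<le> g X"
  shows "ereal v \<le> Phi_hat s X 0"
  unfolding Phi_hat_def concave_env_def using assms by (auto intro!: Inf_greatest)

lemma decomp:
  fixes g :: "real^'n::finite^'n \<Rightarrow> ereal" and q :: "nat \<Rightarrow> real^'n" and lam :: "nat \<Rightarrow> real"
  assumes conc: "hypo_concave_on {Y. psd Y} g"
    and maj: "\<And>Y. psd Y \<Longrightarrow> Phi s Y 0 \<le> g Y"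
    and q: "onb q" and ln0: "\<And>j. j < CARD('n) \<Longrightarrow> 0 \<le> lam j"
    and k0s: "k0 < s" and sn: "s \<le> CARD('n)" and Tpos: "0 < T"
    and lampos: "\<And>j. j < k0 \<Longrightarrow> 0 < lam j"
  shows "(\<forall>j. k0 \<le> j \<longrightarrow> j < CARD('n) \<longrightarrow> 0 \<le> c j \<and> c j \<le> 1) \<Longrightarrow> (\<Sum>j\<in>{k0..<CARD('n)}. c j) = real (s - k0) \<Longrightarrow>
    ereal ((\<Sum>k<k0. ln (lam k)) + real (s - k0) * ln (T / real (s - k0)))
      \<le> g (\<Sum>j<CARD('n). (if j < k0 then lam j else (T / real (s - k0)) * c j) *\<^sub>R outer (q j))"
proof -
  define n where "n = CARD('n)"
  define m where "m = s - k0"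
  have mpos: "0 < real m" using k0s by (simp add: m_def)
  define F where "F = (\<Sum>k<k0. ln (lam k)) + real m * ln (T / real m)"
  define Yc where "Yc c = (\<Sum>j<n. (if j < k0 then lam j else (T / real m) * c j) *\<^sub>R outer (q j))" for c
  define valid where "valid c \<longleftrightarrow> (\<forall>j. k0 \<le> j \<longrightarrow> j < n \<longrightarrow> 0 \<le> c j \<and> c j \<le> 1) \<and> (\<Sum>j\<in>{k0..<n}. c j) = real m"
    for c :: "nat \<Rightarrow> real"
  define frac where "frac c = {j\<in>{k0..<n}. 0 < c j \<and> c j < 1}" for c :: "nat \<Rightarrow> real"
  have finfrac: "finite (frac c)" for c by (simp add: frac_def)
  have Ypsd: "psd (Yc c)" if "valid c" for c
    unfolding Yc_def n_def
    by (rule spec_psd_gen) (use that ln0 Tpos mpos in \<open>auto simp: valid_def n_def\<close>)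
  have main: "\<forall>c. card (frac c) = N \<longrightarrow> valid c \<longrightarrow> ereal F \<le> g (Yc c)" for N
  proof (induction N rule: less_induct)
    case (less N)
    show ?case
    proof (intro allI impI)
      fix c assume cN: "card (frac c) = N" and vc: "valid c"
      show "ereal F \<le> g (Yc c)"
      proof (cases "frac c = {}")
        case True
        then have c01: "c j = 0 \<or> c j = 1" if "j \<in> {k0..<n}" for j
          using vc that by (force simp: frac_def valid_def)
        define S where "S = {j\<in>{k0..<n}. c j = 1}"
        have cardS: "card S = m"
        proof -
          have "real (card S) = (\<Sum>j\<in>{k0..<n}. c j)" unfolding S_def by (rule sum_01[symmetric]) (use c01 in auto)
          then show ?thesis using vc by (simp add: valid_def)
        qed
        define d where "d j = (if j < k0 then lam j else (T / real m) * c j)" for j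
        have d0: "0 \<le> d j" if "j < CARD('n)" for j
          using that ln0 vc Tpos mpos by (auto simp: d_def valid_def n_def)
        have pos: "{j. j < CARD('n) \<and> 0 < d j} = {..<k0} \<union> S"
        proof -
          have "0 < d j \<longleftrightarrow> (j < k0 \<or> j \<in> S)" if "j < n" for j
            using that lampos c01[of j] Tpos mpos by (auto simp: d_def S_def)
          then show ?thesis using k0s sn by (auto simp: n_def S_def)
        qed
        have disj: "{..<k0} \<inter> S = {}" by (auto simp: S_def)
        have cpos: "card {j. j < CARD('n) \<and> 0 < d j} = s"
          unfolding pos using disj cardS k0s by (simp add: card_Un_disjoint S_def m_def)
        have eig: "eig_mset (Yc c) = image_mset d (mset_set {..<CARD('n)})"
          by (rule eig_mset_spec[OF q]) (simp add: Yc_def d_def n_def)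
        have "Phi s (Yc c) 0 = ereal (\<Sum>j\<in>{j. j < CARD('n) \<and> 0 < d j}. ln (d j))"
          by (rule Phi_spec[OF eig d0 cpos])
        also have "(\<Sum>j\<in>{j. j < CARD('n) \<and> 0 < d j}. ln (d j)) = (\<Sum>j<k0. ln (d j)) + (\<Sum>j\<in>S. ln (d j))"
          unfolding pos using disj by (simp add: sum.union_disjoint S_def)
        also have "(\<Sum>j<k0. ln (d j)) = (\<Sum>k<k0. ln (lam k))" by (rule sum.cong) (auto simp: d_def)
        also have "(\<Sum>j\<in>S. ln (d j)) = (\<Sum>j\<in>S. ln (T / real m))" by (rule sum.cong) (auto simp: d_def S_def)
        also have "\<dots> = real m * ln (T / real m)" using cardS by simp
        finally have "Phi s (Yc c) 0 = ereal F" by (simp add: F_def)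
        then show ?thesis using maj[OF Ypsd[OF vc]] by simp
      next
        case False
        then obtain i where i: "i \<in> frac c" by blast
        have "\<exists>j\<in>frac c. j \<noteq> i"
        proof (rule ccontr)
          assume "\<not> (\<exists>j\<in>frac c. j \<noteq> i)"
          then have only: "c j = 0 \<or> c j = 1" if "j \<in> {k0..<n} - {i}" for j
            using that vc by (force simp: frac_def valid_def)
          have ik: "i \<in> {k0..<n}" using i by (simp add: frac_def)
          have "(\<Sum>j\<in>{k0..<n}. c j) = c i + (\<Sum>j\<in>{k0..<n} - {i}. c j)"
            using ik by (simp add: sum.remove)
          also have "(\<Sum>j\<in>{k0..<n} - {i}. c j) = real (card {j\<in>{k0..<n} - {i}. c j = 1})"
            by (rule sum_01) (use only in auto)
          finally have "c i = real m - real (card {j\<in>{k0..<n} - {i}. c j = 1})" using vc by (simp add: valid_def)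
          moreover have "0 < c i" "c i < 1" using i by (auto simp: frac_def)
          ultimately have r1: "real (card {j\<in>{k0..<n} - {i}. c j = 1}) < real m"
            and r2: "real m < real (card {j\<in>{k0..<n} - {i}. c j = 1}) + 1" by linarith+
          from r1 have "card {j\<in>{k0..<n} - {i}. c j = 1} < m" by (simp only: of_nat_less_iff)
          moreover from r2 have "m < card {j\<in>{k0..<n} - {i}. c j = 1} + 1"
            by (metis of_nat_1 of_nat_add of_nat_less_iff)
          ultimately show False by simp
        qed
        then obtain j where j: "j \<in> frac c" "j \<noteq> i" by blast
        have ci: "0 < c i" "c i < 1" "k0 \<le> i" "i < n" using i by (auto simp: frac_def)
        have cj: "0 < c j" "c j < 1" "k0 \<le> j" "j < n" using j by (auto simp: frac_def)
        define e1 where "e1 = min (1 - c i) (c j)"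
        define e2 where "e2 = min (c i) (1 - c j)"
        have e1: "0 < e1" using ci cj by (simp add: e1_def)
        have e2: "0 < e2" using ci cj by (simp add: e2_def)
        define dl where "dl k = (if k = i then 1 else 0) - (if k = j then 1 else (0::real))" for k
        define c1 where "c1 k = c k + e1 * dl k" for k
        define c2 where "c2 k = c k - e2 * dl k" for k
        have sdl: "(\<Sum>k\<in>{k0..<n}. dl k) = 0"
          using ci cj by (simp add: dl_def sum_subtractf)
        have v1: "valid c1"
        proof -
          have "(\<Sum>k\<in>{k0..<n}. c1 k) = (\<Sum>k\<in>{k0..<n}. c k)"
            using sdl by (simp add: c1_def sum.distrib sum_distrib_left[symmetric])
          moreover have "0 \<le> c1 k \<and> c1 k \<le> 1" if "k0 \<le> k" "k < n" for k
            using vc that j(2) ci cj e1 by (auto simp: c1_def dl_def valid_def e1_def)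
          ultimately show ?thesis using vc by (simp add: valid_def)
        qed
        have v2: "valid c2"
        proof -
          have "(\<Sum>k\<in>{k0..<n}. c2 k) = (\<Sum>k\<in>{k0..<n}. c k)"
            using sdl by (simp add: c2_def sum_subtractf sum_distrib_left[symmetric])
          moreover have "0 \<le> c2 k \<and> c2 k \<le> 1" if "k0 \<le> k" "k < n" for k
            using vc that j(2) ci cj e2 by (auto simp: c2_def dl_def valid_def e2_def)
          ultimately show ?thesis using vc by (simp add: valid_def)
        qed
        have sub1: "frac c1 \<subset> frac c"
        proof
          show "frac c1 \<subseteq> frac c"
          proof
            fix k assume k: "k \<in> frac c1"
            show "k \<in> frac c"
            proof (cases "k = i \<or> k = j")
              case True then show ?thesis using i j by auto
            next
              case False then show ?thesis using k by (simp add: frac_def c1_def dl_def)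
            qed
          qed
          have "i \<notin> frac c1 \<or> j \<notin> frac c1"
            using j(2) by (auto simp: frac_def c1_def dl_def e1_def min_def split: if_splits)
          then show "frac c1 \<noteq> frac c" using i j by blast
        qed
        have sub2: "frac c2 \<subset> frac c"
        proof
          show "frac c2 \<subseteq> frac c"
          proof
            fix k assume k: "k \<in> frac c2"
            show "k \<in> frac c"
            proof (cases "k = i \<or> k = j")
              case True then show ?thesis using i j by auto
            next
              case False then show ?thesis using k by (simp add: frac_def c2_def dl_def)
            qed
          qed
          have "i \<notin> frac c2 \<or> j \<notin> frac c2"
            using j(2) by (auto simp: frac_def c2_def dl_def e2_def min_def split: if_splits)
          then show "frac c2 \<noteq> frac c" using i j by blast
        qed
        have lt1: "card (frac c1) < N" using psubset_card_mono[OF finfrac sub1] cN by simp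
        have lt2: "card (frac c2) < N" using psubset_card_mono[OF finfrac sub2] cN by simp
        have g1: "ereal F \<le> g (Yc c1)" using less.IH[OF lt1] v1 by blast
        have g2: "ereal F \<le> g (Yc c2)" using less.IH[OF lt2] v2 by blast
        define u where "u = e2 / (e1 + e2)"
        have u01: "0 \<le> u" "u \<le> 1" using e1 e2 by (auto simp: u_def)
        have cc: "c k = u * c1 k + (1 - u) * c2 k" for k
        proof -
          have z: "u * e1 - (1 - u) * e2 = 0" using e1 e2 by (simp add: u_def field_simps)
          have "u * c1 k + (1 - u) * c2 k = c k + (u * e1 - (1 - u) * e2) * dl k"
            by (simp add: c1_def c2_def algebra_simps)
          then show ?thesis using z by simp
        qed
        have Yaff: "Yc c = u *\<^sub>R Yc c1 + (1 - u) *\<^sub>R Yc c2"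
        proof -
          have "Yc c = (\<Sum>k<n. u *\<^sub>R ((if k < k0 then lam k else (T / real m) * c1 k) *\<^sub>R outer (q k))
                     + (1 - u) *\<^sub>R ((if k < k0 then lam k else (T / real m) * c2 k) *\<^sub>R outer (q k)))"
            unfolding Yc_def
          proof (rule sum.cong)
            fix k assume "k \<in> {..<n}"
            show "(if k < k0 then lam k else T / real m * c k) *\<^sub>R outer (q k) =
              u *\<^sub>R ((if k < k0 then lam k else T / real m * c1 k) *\<^sub>R outer (q k)) +
              (1 - u) *\<^sub>R ((if k < k0 then lam k else T / real m * c2 k) *\<^sub>R outer (q k))"
            proof -
              have eq: "(if k < k0 then lam k else T / real m * c k) =
                u * (if k < k0 then lam k else T / real m * c1 k) + (1 - u) * (if k < k0 then lam k else T / real m * c2 k)"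
              proof (cases "k < k0")
                case True then show ?thesis by (simp add: algebra_simps)
              next
                case False
                have "T / real m * c k = u * (T / real m * c1 k) + (1 - u) * (T / real m * c2 k)"
                  using mpos by (subst cc[of k]) (simp add: field_simps)
                then show ?thesis using False by simp
              qed
              show ?thesis by (simp only: eq scaleR_add_left scaleR_scaleR)
            qed
          qed simp
          also have "\<dots> = u *\<^sub>R Yc c1 + (1 - u) *\<^sub>R Yc c2"
            by (simp add: Yc_def sum.distrib scaleR_sum_right)
          finally show ?thesis .
        qed
        have "ereal (u * F + (1 - u) * F) \<le> g (u *\<^sub>R Yc c1 + (1 - u) *\<^sub>R Yc c2)"
          using conc Ypsd[OF v1] Ypsd[OF v2] u01 g1 g2 unfolding hypo_concave_on_def by blast
        moreover have "u * F + (1 - u) * F = F" by (simp add: algebra_simps)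
        ultimately show ?thesis by (simp only: Yaff)
      qed
    qed
  qed
  assume a1: "\<forall>j. k0 \<le> j \<longrightarrow> j < CARD('n) \<longrightarrow> 0 \<le> c j \<and> c j \<le> 1"
    and a2: "(\<Sum>j\<in>{k0..<CARD('n)}. c j) = real (s - k0)"
  have "valid c" using a1 a2 by (simp add: valid_def n_def m_def)
  then have "ereal F \<le> g (Yc c)" using main by blast
  then show ?thesis unfolding F_def Yc_def m_def n_def .
qed

lemma Mof_range: "M_of A x *v v = A *v (\<chi> i. x $ i * (column i A \<bullet> v))"
  unfolding Mof_mulv mulv_col[of A "(\<chi> i. x $ i * (column i A \<bullet> v))"] by simp

lemma rank_zero_tail:
  fixes At :: "real^'n::finite^'n" and p :: "nat \<Rightarrow> real^'n"
  assumes p: "onb p" and Mt: "M_of At x = (\<Sum>i<CARD('n). mu i *\<^sub>R outer (p i))"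
    and md: "\<And>i j. i \<le> j \<Longrightarrow> j < CARD('n) \<Longrightarrow> mu j \<le> mu i"
    and mn0: "\<And>i. i < CARD('n) \<Longrightarrow> 0 \<le> mu i"
    and rk: "rank (transpose At ** At) \<le> s"
    and ks: "s \<le> k" and kn: "k < CARD('n)"
  shows "mu k = 0"
proof (rule ccontr)
  assume "mu k \<noteq> 0"
  then have mk: "0 < mu k" using mn0[OF kn] by simp
  have mpos: "0 < mu j" if "j \<le> k" for j using md[OF that kn] mk by simp
  define P where "P = p ` {..k}"
  define R where "R = range ((*v) At)"
  have subR: "subspace R" unfolding R_def
    by (rule linear_subspace_image[OF matrix_vector_mul_linear subspace_UNIV])
  have pR: "p j \<in> R" if "j \<le> k" for j
  proof -
    have "M_of At x *v p j = mu j *\<^sub>R p j" using Mt spec_eig[OF p] that kn by simp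
    then have "p j = (1 / mu j) *\<^sub>R (M_of At x *v p j)" using mpos[OF that] by simp
    also have "\<dots> = At *v ((1 / mu j) *\<^sub>R (\<chi> i. x $ i * (column i At \<bullet> p j)))"
      by (simp add: Mof_range matrix_vector_mult_scaleR)
    finally show ?thesis by (simp add: R_def)
  qed
  have spanR: "span P \<subseteq> R" using pR subR by (intro span_minimal) (auto simp: P_def)
  define f where "f = (*v) (transpose At)"
  have injf: "inj_on f (span P)"
  proof (rule inj_onI)
    fix a b assume a: "a \<in> span P" and b: "b \<in> span P" and fab: "f a = f b"
    obtain ra where ra: "a = At *v ra" using a spanR by (auto simp: R_def)
    obtain rb where rb: "b = At *v rb" using b spanR by (auto simp: R_def)
    have "(transpose At ** At) *v (ra - rb) = 0"
      using fab by (simp add: f_def ra rb matrix_vector_mul_assoc[symmetric] matrix_vector_mult_diff_distrib)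
    then have "(At *v (ra - rb)) \<bullet> (At *v (ra - rb)) = 0" by (simp add: normA)
    then have "At *v (ra - rb) = 0" by simp
    then show "a = b" by (simp add: ra rb matrix_vector_mult_diff_distrib)
  qed
  have indP: "independent P"
  proof (rule pairwise_orthogonal_independent)
    show "pairwise orthogonal P"
      using p kn by (auto simp: P_def pairwise_def orthogonal_def onb_def)
    have "p j \<noteq> 0" if "j \<le> k" for j
    proof -
      have "p j \<bullet> p j = 1" using p that kn by (simp add: onb_def)
      then show ?thesis by auto
    qed
    then show "0 \<notin> P" by (auto simp: P_def)
  qed
  have indfP: "independent (f ` P)"
    using injf unfolding f_def by (rule linear_independent_injective_image[OF matrix_vector_mul_linear indP])
  have fPsub: "f ` P \<subseteq> range ((*v) (transpose At ** At))"
  proof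
    fix z assume "z \<in> f ` P"
    then obtain j where j: "j \<le> k" "z = f (p j)" by (auto simp: P_def)
    obtain r where "p j = At *v r" using pR[OF j(1)] by (auto simp: R_def)
    then have "z = (transpose At ** At) *v r" using j by (simp add: f_def matrix_vector_mul_assoc)
    then show "z \<in> range ((*v) (transpose At ** At))" by simp
  qed
  have "card (f ` P) \<le> dim (range ((*v) (transpose At ** At)))"
    by (rule independent_card_le_dim[OF fPsub indfP])
  also have "\<dots> = rank (transpose At ** At)" by (simp add: rank_dim_range)
  finally have c1: "card (f ` P) \<le> s" using rk by simp
  have injp: "inj_on p {..k}"
  proof (rule inj_onI)
    fix i j assume i: "i \<in> {..k}" and j: "j \<in> {..k}" and e: "p i = p j"
    have "p i \<bullet> p i = 1" using p i kn by (simp add: onb_def)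
    then have "p i \<bullet> p j = 1" using e by simp
    then show "i = j" using p i j kn by (auto simp: onb_def split: if_splits)
  qed
  have "card (f ` P) = card P"
    by (rule card_image[OF inj_on_subset[OF injf span_superset]])
  also have "\<dots> = Suc k" using injp by (simp add: P_def card_image)
  finally show False using c1 ks by simp
qed

lemma trace_spec:
  fixes A :: "real^'n::finite^'n" and q :: "nat \<Rightarrow> real^'n"
  assumes q: "onb q" and M: "M_of A x = (\<Sum>i<CARD('n). lam i *\<^sub>R outer (q i))"
  shows "(\<Sum>k<CARD('n). lam k) = (\<Sum>i\<in>UNIV. x $ i * (column i A \<bullet> column i A))"
proof -
  have "(\<Sum>k<CARD('n). lam k) = (\<Sum>k<CARD('n). \<Sum>i\<in>UNIV. x $ i * (column i A \<bullet> q k)^2)"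
  proof (rule sum.cong)
    fix k assume "k \<in> {..<CARD('n)}"
    then have "lam k = q k \<bullet> (M_of A x *v q k)" using spec_diag[OF q M] by simp
    then show "lam k = (\<Sum>i\<in>UNIV. x $ i * (column i A \<bullet> q k)^2)" by (simp add: Mof_quad)
  qed simp
  also have "\<dots> = (\<Sum>i\<in>UNIV. x $ i * (\<Sum>k<CARD('n). (q k \<bullet> column i A)^2))"
    by (subst sum.swap) (simp add: sum_distrib_left inner_commute)
  also have "\<dots> = (\<Sum>i\<in>UNIV. x $ i * (column i A \<bullet> column i A))"
    by (simp add: onb_parseval[OF q])
  finally show ?thesis .
qed

lemma key_bound:
  fixes A0 At :: "real^'n::finite^'n" and x :: "real^'n"
  assumes CA: "transpose A0 ** A0 = transpose At ** At + t *\<^sub>R mat 1"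
    and s1: "1 \<le> s" and sn: "s \<le> CARD('n)" and t0: "0 < t"
    and rk: "rank (transpose At ** At) \<le> s"
    and x: "x \<in> feas s"
  shows "ereal (ln (det (M_of At x + t *\<^sub>R mat 1)) - (real CARD('n) - real s) * ln t) \<le> Phi_hat s (M_of A0 x) 0"
proof -
  have x01: "\<And>i. 0 \<le> x $ i \<and> x $ i \<le> 1" and xs: "(\<Sum>i\<in>UNIV. x $ i) = real s"
    using x by (auto simp: feas_def)
  have x0: "\<And>i. 0 \<le> x $ i" using x01 by simp
  obtain q lam where q: "onb q" and ld: "\<And>i j. i \<le> j \<Longrightarrow> j < CARD('n) \<Longrightarrow> lam j \<le> lam i"
    and M0: "M_of A0 x = (\<Sum>i<CARD('n). lam i *\<^sub>R outer (q i))"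
    using spectral[OF Mof_sym[of A0 x]] by blast
  obtain p mu where p: "onb p" and md: "\<And>i j. i \<le> j \<Longrightarrow> j < CARD('n) \<Longrightarrow> mu j \<le> mu i"
    and Mt: "M_of At x = (\<Sum>i<CARD('n). mu i *\<^sub>R outer (p i))"
    using spectral[OF Mof_sym[of At x]] by blast
  have ln0: "0 \<le> lam i" if "i < CARD('n)" for i by (rule spec_psd_nonneg[OF q Mof_psd[OF x0] M0 that])
  have mn0: "0 \<le> mu i" if "i < CARD('n)" for i by (rule spec_psd_nonneg[OF p Mof_psd[OF x0] Mt that])
  have tail0: "mu k = 0" if "s \<le> k" "k < CARD('n)" for k
    by (rule rank_zero_tail[OF p Mt md mn0 rk that])
  have part: "(\<Sum>k<m. lam k) \<le> (\<Sum>k<m. mu k) + real m * t" if "m \<le> s" for m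
    by (rule partial_sums[OF CA x01 _ q M0 p Mt md mn0]) (use t0 that sn in auto)
  have tot: "(\<Sum>k<CARD('n). lam k) = (\<Sum>k<s. mu k) + real s * t"
  proof -
    have col: "column i A0 \<bullet> column i A0 = column i At \<bullet> column i At + t" for i
    proof -
      have "(transpose A0 ** A0) $ i $ i = (transpose At ** At + t *\<^sub>R mat 1) $ i $ i" by (simp only: CA)
      then show ?thesis by (simp add: matrix_mult_transpose_dot_column mat_def)
    qed
    have "(\<Sum>k<CARD('n). lam k) = (\<Sum>i\<in>UNIV. x $ i * (column i A0 \<bullet> column i A0))" by (rule trace_spec[OF q M0])
    also have "\<dots> = (\<Sum>i\<in>UNIV. x $ i * (column i At \<bullet> column i At)) + t * (\<Sum>i\<in>UNIV. x $ i)"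
      by (simp add: col algebra_simps sum.distrib sum_distrib_left sum_distrib_right)
    also have "(\<Sum>i\<in>UNIV. x $ i * (column i At \<bullet> column i At)) = (\<Sum>k<CARD('n). mu k)"
      by (rule trace_spec[OF p Mt, symmetric])
    also have "(\<Sum>k<CARD('n). mu k) = (\<Sum>k<s. mu k) + (\<Sum>k\<in>{s..<CARD('n)}. mu k)"
      using sn by (rule split_lessThan)
    also have "(\<Sum>k\<in>{s..<CARD('n)}. mu k) = 0" using tail0 by simp
    finally show ?thesis using xs by simp
  qed
  obtain k0 where k0s: "k0 < s" and Tpos: "0 < (\<Sum>j\<in>{k0..<CARD('n)}. lam j)"
    and lampos: "\<And>j. j < k0 \<Longrightarrow> 0 < lam j"
    and lamT: "\<And>j. k0 \<le> j \<Longrightarrow> j < CARD('n) \<Longrightarrow> lam j * real (s - k0) \<le> (\<Sum>j\<in>{k0..<CARD('n)}. lam j)"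
    and sc: "(\<Sum>k<s. ln (mu k + t)) \<le> (\<Sum>k<k0. ln (lam k)) + real (s - k0) * ln ((\<Sum>j\<in>{k0..<CARD('n)}. lam j) / real (s - k0))"
    using scalar_main[OF s1 sn t0 ld ln0 md mn0 part tot] by blast
  define T where "T = (\<Sum>j\<in>{k0..<CARD('n)}. lam j)"
  define m where "m = s - k0"
  have mpos: "0 < real m" using k0s by (simp add: m_def)
  define c where "c j = lam j * real m / T" for j
  have cbox: "\<forall>j. k0 \<le> j \<longrightarrow> j < CARD('n) \<longrightarrow> 0 \<le> c j \<and> c j \<le> 1"
    using lamT ln0 Tpos mpos by (auto simp: c_def T_def m_def)
  have csum: "(\<Sum>j\<in>{k0..<CARD('n)}. c j) = real (s - k0)"
  proof -
    have "(\<Sum>j\<in>{k0..<CARD('n)}. c j) = (\<Sum>j\<in>{k0..<CARD('n)}. (real m / T) * lam j)"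
      by (rule sum.cong) (simp_all add: c_def)
    also have "\<dots> = (real m / T) * T" by (simp only: sum_distrib_left[symmetric] T_def)
    also have "\<dots> = real m" using Tpos by (simp add: T_def)
    finally show ?thesis by (simp add: m_def)
  qed
  have Yeq: "(\<Sum>j<CARD('n). (if j < k0 then lam j else (T / real (s - k0)) * c j) *\<^sub>R outer (q j)) = M_of A0 x"
    unfolding M0 by (rule sum.cong) (use Tpos mpos in \<open>auto simp: c_def T_def m_def\<close>)
  have env: "ereal ((\<Sum>k<k0. ln (lam k)) + real (s - k0) * ln (T / real (s - k0))) \<le> Phi_hat s (M_of A0 x) 0"
  proof (rule Phi_hat_lower)
    fix g :: "real^'n^'n \<Rightarrow> ereal"
    assume conc: "hypo_concave_on {Y. psd Y} g" and maj: "\<forall>Y\<in>{Y. psd Y}. Phi s Y 0 \<le> g Y"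
    have "ereal ((\<Sum>k<k0. ln (lam k)) + real (s - k0) * ln (T / real (s - k0)))
      \<le> g (\<Sum>j<CARD('n). (if j < k0 then lam j else (T / real (s - k0)) * c j) *\<^sub>R outer (q j))"
      by (rule decomp[OF conc _ q ln0 k0s sn _ lampos cbox csum]) (use maj Tpos in \<open>auto simp: T_def\<close>)
    then show "ereal ((\<Sum>k<k0. ln (lam k)) + real (s - k0) * ln (T / real (s - k0))) \<le> g (M_of A0 x)"
      by (simp only: Yeq)
  qed
  have det: "ln (det (M_of At x + t *\<^sub>R mat 1)) = (\<Sum>k<CARD('n). ln (mu k + t))"
  proof -
    have "det (M_of At x + t *\<^sub>R mat 1) = (\<Prod>k<CARD('n). mu k + t)" unfolding Mt by (rule det_spec_shift[OF p])
    moreover have "mu k + t \<noteq> 0" if "k < CARD('n)" for k using mn0[OF that] t0 by simp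
    ultimately show ?thesis using ln_prod[of "{..<CARD('n)}" "\<lambda>k. mu k + t"] by simp
  qed
  have "(\<Sum>k<CARD('n). ln (mu k + t)) = (\<Sum>k<s. ln (mu k + t)) + (\<Sum>k\<in>{s..<CARD('n)}. ln (mu k + t))"
    using sn by (rule split_lessThan)
  also have "(\<Sum>k\<in>{s..<CARD('n)}. ln (mu k + t)) = (\<Sum>k\<in>{s..<CARD('n)}. ln t)"
    by (rule sum.cong) (auto simp: tail0)
  also have "\<dots> = (real CARD('n) - real s) * ln t" using sn by (simp add: of_nat_diff)
  finally have "ln (det (M_of At x + t *\<^sub>R mat 1)) - (real CARD('n) - real s) * ln t = (\<Sum>k<s. ln (mu k + t))"
    using det by simp
  then have e1: "ereal (ln (det (M_of At x + t *\<^sub>R mat 1)) - (real CARD('n) - real s) * ln t) = ereal (\<Sum>k<s. ln (mu k + t))"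
    by simp
  have e2: "ereal (\<Sum>k<s. ln (mu k + t)) \<le> ereal ((\<Sum>k<k0. ln (lam k)) + real (s - k0) * ln (T / real (s - k0)))"
    using sc by (simp add: T_def)
  show ?thesis unfolding e1 using e2 env by (rule order.trans)
qed

lemma feas_ne: "1 \<le> s \<Longrightarrow> s \<le> CARD('n::finite) \<Longrightarrow> (feas s :: (real^'n) set) \<noteq> {}"
proof -
  assume a: "1 \<le> s" "s \<le> CARD('n)"
  have "(\<chi> i. real s / real CARD('n)) \<in> (feas s :: (real^'n) set)"
    using a by (simp add: feas_def divide_le_eq_1)
  then show ?thesis by auto
qed

theorem corollary4:
  fixes C A0 At :: "real^('n::{finite,linorder})^('n::{finite,linorder})" and s :: nat and t :: real
  assumes "1 \<le> s" and "s \<le> CARD('n)"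
    and "pd C"
    and "0 < t" and "t \<le> lambda_min C"
    and "cholesky_factor A0 C"
    and "cholesky_factor At (C - t *\<^sub>R mat 1)"
    and "s \<ge> rank (C - t *\<^sub>R mat 1)"
  shows "ereal (zD s t At) \<le> zhat0 s A0"
proof -
  have C0: "C = transpose A0 ** A0" using assms(6) by (simp add: cholesky_factor_def)
  have Ct: "C - t *\<^sub>R mat 1 = transpose At ** At" using assms(7) by (simp add: cholesky_factor_def)
  have CA: "transpose A0 ** A0 = transpose At ** At + t *\<^sub>R mat 1" using C0 Ct by (simp add: algebra_simps)
  have rk: "rank (transpose At ** At) \<le> s" using assms(8) Ct by simp
  define c where "c = (real CARD('n) - real s) * ln t"
  have each: "ereal (ln (det (M_of At x + t *\<^sub>R mat 1)) - c) \<le> zhat0 s A0" if "x \<in> feas s" for x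
  proof -
    have "ereal (ln (det (M_of At x + t *\<^sub>R mat 1)) - c) \<le> Phi_hat s (M_of A0 x) 0"
      unfolding c_def by (rule key_bound[OF CA assms(1,2,4) rk that])
    also have "\<dots> \<le> zhat0 s A0" unfolding zhat0_def using that by (rule SUP_upper)
    finally show ?thesis .
  qed
  have ex: "\<exists>x\<in>feas s. ereal (ln (det (M_of At x + t *\<^sub>R mat 1)) - c) \<le> zhat0 s A0"
    using each feas_ne[OF assms(1,2)] by blast
  show ?thesis
  proof (cases "zhat0 s A0")
    case (real Z)
    have bnd: "ln (det (M_of At x + t *\<^sub>R mat 1)) \<le> Z + c" if "x \<in> feas s" for x
      using each[OF that] real by simp
    have "(SUP x\<in>feas s. ln (det (M_of At x + t *\<^sub>R mat 1))) \<le> Z + c"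
      by (rule cSUP_least[OF feas_ne[OF assms(1,2)] bnd])
    then have "zD s t At \<le> Z" by (simp add: zD_def c_def)
    then show ?thesis using real by simp
  next
    case PInf then show ?thesis by simp
  next
    case MInf
    then show ?thesis using ex by auto
  qed
qed

end
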